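(* (i) If the coin process satisfies $\overline H(\mathbf X)=\underline H(\mathbf X)=H(\mathbf X)>0$, then for every target process $\mathbf Y$, \[R^\star_{\mathrm{int}}(\mathbf X,\mathbf Y)=R^\star(\mathbf X,\mathbf Y)=\frac{\overline H(\mathbf Y)}{H(\mathbf X)}.\] (ii) If the target process satisfies $\overline H(\mathbf Y)=\underline H(\mathbf Y)=H(\mathbf Y)$ and the coin process satisfies $\underline H(\mathbf X)>0$, then \[R^\star_{\mathrm{int}}(\mathbf X,\mathbf Y)=R^\star(\mathbf X,\mathbf Y)=\frac{H(\mathbf Y)}{\underline H(\mathbf X)}.\]
   Context: Logarithms are base 2. $\mathcal X$, $\mathcal Y$ are finite; $\mathbf X=\{X^m\}$ (coin) and $\mathbf Y=\{Y^n\}$ (target) are arbitrary processes given by consistent distributions. $\overline H(\mathbf X)=\inf\{\lambda:\lim_n\Pr(\frac1n\log\frac{1}{P_{X^n}(X^n)}\ge\lambda)=0\}$, $\underline H(\mathbf X)=\sup\{\lambda:\lim_n\Pr(\frac1n\log\frac{1}{P_{X^n}(X^n)}\le\lambda)=0\}$, $H(\mathbf X)=\limsup_n\frac1nH(X^n)$; likewise for $\mathbf Y$ (when $\overline H=\underline H$ the limit defining $H$ exists and equals them). A random number generation algorithm for $Y^n$ is a map $\phi:\bigcup_{i\ge0}\mathcal X^i\to\{\bot\}\cup\mathcal Y^n$ whose leaves (finite $s$ with $\phi(s)\in\mathcal Y^n$ and $\phi(s')=\bot$ for all proper prefixes $s'$) satisfy $\sum_{\text{leaves }s:\phi(s)=y^n}P_{X^{|s|}}(s)=P_{Y^n}(y^n)$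 for all $y^n$; its stopping time is the length of the leaf reached by $X_1,X_2,\dots$ ($\infty$ if none). For algorithms $\phi_n$ generating $Y^n$ with stopping times $T_n$, $R$ is achievable if $\lim_n\Pr(T_n>nR)=0$; $R^\star$ is the infimum achievable rate over all valid algorithms and $R^\star_{\mathrm{int}}$ that for the interval algorithm. Interval algorithm: with $\mathcal X=\{1,\dots,M\}$, $\mathcal I_\bot=[0,1)$, $\mathcal I_{sx}=[\underline\alpha_s+(\overline\alpha_s-\underline\alpha_s)\sum_{k<x}P_{X_{i+1}|X^i}(k|s),\ \underline\alpha_s+(\overline\alpha_s-\underline\alpha_s)\sum_{k\le x}P_{X_{i+1}|X^i}(k|s))$ for $s\in\mathcal X^i$ with $\mathcal I_s=[\underline\alpha_s,\overline\alpha_s)$; $\mathcal J_t$ for $t\in\mathcal Y^j$ likewise from $P_{Y_{j+1}|Y^j}$; stop at the first $m$ with $\mathcal I_{X^m}\subseteq\mathcal J_{y^n}$ for some $y^n$ and output that $y^n$. *)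

theory Defs
  imports "HOL-Analysis.Analysis" "HOL-Library.Sublist"
begin

text \<open>A process over a finite alphabet is given by its consistent family of
  finite-dimensional distributions, encoded as one function on words:
  p xs = P_{X^n}(xs) for n = length xs.\<close>

definition process :: "('a::finite list \<Rightarrow> real) \<Rightarrow> bool" where
  "process p \<longleftrightarrow> p [] = 1 \<and> (\<forall>xs. 0 \<le> p xs) \<and>
     (\<forall>xs. p xs = (\<Sum>a\<in>UNIV. p (xs @ [a])))"

definition prob_len :: "('a::finite list \<Rightarrow> real) \<Rightarrow> nat \<Rightarrow> ('a list \<Rightarrow> bool) \<Rightarrow> real" where
  "prob_len p n Q = (\<Sum>xs\<in>{xs. length xs = n \<and> Q xs}. p xs)"

definition info_rate :: "('a list \<Rightarrow> real) \<Rightarrow> nat \<Rightarrow> 'a list \<Rightarrow> real" where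
  "info_rate p n xs = log 2 (1 / p xs) / real n"

definition sup_entropy :: "('a::finite list \<Rightarrow> real) \<Rightarrow> real" where
  "sup_entropy p = Inf {l. (\<lambda>n. prob_len p n (\<lambda>xs. info_rate p n xs \<ge> l)) \<longlonglongrightarrow> 0}"

definition inf_entropy :: "('a::finite list \<Rightarrow> real) \<Rightarrow> real" where
  "inf_entropy p = Sup {l. (\<lambda>n. prob_len p n (\<lambda>xs. info_rate p n xs \<le> l)) \<longlonglongrightarrow> 0}"

definition block_entropy :: "('a::finite list \<Rightarrow> real) \<Rightarrow> nat \<Rightarrow> real" where
  "block_entropy p n = (\<Sum>xs\<in>{xs. length xs = n}. - p xs * log 2 (p xs))"

definition entropy_rate :: "('a::finite list \<Rightarrow> real) \<Rightarrow> real" where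
  "entropy_rate p = real_of_ereal (limsup (\<lambda>n. ereal (block_entropy p n / real n)))"

text \<open>An algorithm is a map from finite coin words to None (standing for bottom)
  or Some target word.\<close>

definition is_leaf :: "('a list \<Rightarrow> 'b list option) \<Rightarrow> 'a list \<Rightarrow> bool" where
  "is_leaf \<phi> s \<longleftrightarrow> \<phi> s \<noteq> None \<and> (\<forall>s'. strict_prefix s' s \<longrightarrow> \<phi> s' = None)"

definition generates ::
  "('a::finite list \<Rightarrow> real) \<Rightarrow> ('b::finite list \<Rightarrow> real) \<Rightarrow> nat \<Rightarrow> ('a list \<Rightarrow> 'b list option) \<Rightarrow> bool" where
  "generates pX pY n \<phi> \<longleftrightarrow>
     (\<forall>s y. \<phi> s = Some y \<longrightarrow> length y = n) \<and>
     (\<forall>y. length y = n \<longrightarrow> (pX has_sum pY y) {s. is_leaf \<phi> s \<and> \<phi> s = Some y})"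

text \<open>Pr(T > t) for the stopping time T of the algorithm: one minus the probability
  of reaching a leaf of length at most t (leaves are prefix-free).\<close>
definition stop_exceeds :: "('a::finite list \<Rightarrow> real) \<Rightarrow> ('a list \<Rightarrow> 'b list option) \<Rightarrow> real \<Rightarrow> real" where
  "stop_exceeds pX \<phi> t = 1 - (\<Sum>s\<in>{s. is_leaf \<phi> s \<and> real (length s) \<le> t}. pX s)"

definition achievable_by ::
  "('a::finite list \<Rightarrow> real) \<Rightarrow> (nat \<Rightarrow> 'a list \<Rightarrow> 'b list option) \<Rightarrow> real \<Rightarrow> bool" where
  "achievable_by pX \<Phi> R \<longleftrightarrow> (\<lambda>n. stop_exceeds pX (\<Phi> n) (real n * R)) \<longlonglongrightarrow> 0"

definition opt_rate :: "('a::finite list \<Rightarrow> real) \<Rightarrow> ('b::finite list \<Rightarrow> real) \<Rightarrow> real" where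
  "opt_rate pX pY = Inf {R. \<exists>\<Phi>. (\<forall>n. generates pX pY n (\<Phi> n)) \<and> achievable_by pX \<Phi> R}"

definition cond_prob :: "('a list \<Rightarrow> real) \<Rightarrow> 'a list \<Rightarrow> 'a \<Rightarrow> real" where
  "cond_prob p s k = p (s @ [k]) / p s"

fun intv_rev :: "('a::{finite,linorder} list \<Rightarrow> real) \<Rightarrow> 'a list \<Rightarrow> real \<times> real" where
  "intv_rev p [] = (0, 1)"
| "intv_rev p (x # rs) =
     (let (a, b) = intv_rev p rs; s = rev rs in
       (a + (b - a) * (\<Sum>k\<in>{k. k < x}. cond_prob p s k),
        a + (b - a) * (\<Sum>k\<in>{k. k \<le> x}. cond_prob p s k)))"

definition intv :: "('a::{finite,linorder} list \<Rightarrow> real) \<Rightarrow> 'a list \<Rightarrow> real set" where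
  "intv p s = (case intv_rev p (rev s) of (a, b) \<Rightarrow> {a..<b})"

definition interval_alg ::
  "('a::{finite,linorder} list \<Rightarrow> real) \<Rightarrow> ('b::{finite,linorder} list \<Rightarrow> real) \<Rightarrow> nat \<Rightarrow> 'a list \<Rightarrow> 'b list option" where
  "interval_alg pX pY n s =
     (if \<exists>y. length y = n \<and> intv pX s \<subseteq> intv pY y
      then Some (SOME y. length y = n \<and> intv pX s \<subseteq> intv pY y) else None)"

definition int_rate ::
  "('a::{finite,linorder} list \<Rightarrow> real) \<Rightarrow> ('b::{finite,linorder} list \<Rightarrow> real) \<Rightarrow> real" where
  "int_rate pX pY = Inf {R. achievable_by pX (interval_alg pX pY) R}"

end

theory Submission
  imports Defs
begin

abbreviation W :: "nat \<Rightarrow> 'a list set" where "W m \<equiv> {xs. length xs = m}"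

lemma finite_W: "finite (W m :: 'a::finite list set)"
  using finite_lists_length_eq[of "UNIV::'a set" m] by simp

lemma W_Suc: "W (Suc k) = (\<lambda>(a,t). a # t) ` (UNIV \<times> W k)"
  by (auto simp: length_Suc_conv image_iff)

lemma sum_W_Suc:
  fixes f :: "'a::finite list \<Rightarrow> real"
  shows "(\<Sum>t\<in>W (Suc k). f t) = (\<Sum>a\<in>UNIV. \<Sum>t\<in>W k. f (a # t))"
proof -
  have inj: "inj_on (\<lambda>(a,t). a # t) (UNIV \<times> W k)" by (auto simp: inj_on_def)
  have "(\<Sum>t\<in>W (Suc k). f t) = (\<Sum>(a,t)\<in>UNIV \<times> W k. f (a # t))"
    unfolding W_Suc by (subst sum.reindex[OF inj]) (simp add: case_prod_beta)
  also have "\<dots> = (\<Sum>a\<in>UNIV. \<Sum>t\<in>W k. f (a # t))"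
    by (rule sum.cartesian_product[symmetric])
  finally show ?thesis .
qed

lemma process_sum: "process p \<Longrightarrow> (\<Sum>a\<in>UNIV. p (xs @ [a])) = p xs"
  unfolding process_def by metis

lemma process_Nil: "process p \<Longrightarrow> p [] = 1"
  unfolding process_def by blast

lemma ext_sum:
  assumes "process p"
  shows "(\<Sum>t\<in>W k. p (s @ t)) = p s"
proof (induction k arbitrary: s)
  case 0 then show ?case by simp
next
  case (Suc k)
  have "(\<Sum>t\<in>W (Suc k). p (s @ t)) = (\<Sum>a\<in>UNIV. \<Sum>t\<in>W k. p ((s @ [a]) @ t))"
    by (simp add: sum_W_Suc)
  also have "\<dots> = (\<Sum>a\<in>UNIV. p (s @ [a]))" by (rule sum.cong[OF refl], rule Suc.IH)
  also have "\<dots> = p s" using process_sum[OF assms] by blast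
  finally show ?case .
qed

lemma process_nonneg: "process p \<Longrightarrow> 0 \<le> p xs"
  unfolding process_def by blast

lemma sum_W: "process p \<Longrightarrow> (\<Sum>x\<in>W m. p x) = 1"
  using ext_sum[where p=p and k=m and s="[]"] process_Nil[of p] by simp

lemma prefix_le: assumes "process p" shows "p (s @ t) \<le> p s"
proof -
  have "p (s @ t) \<le> (\<Sum>u\<in>W (length t). p (s @ u))"
    by (rule member_le_sum[where f="\<lambda>u. p (s @ u)"]) (auto simp: finite_W process_nonneg[OF assms])
  then show ?thesis using ext_sum[OF assms, where k="length t" and s=s] by linarith
qed

lemma process_le1: assumes "process p" shows "p xs \<le> 1"
  using prefix_le[OF assms, of "[]" xs] process_Nil[OF assms] by simp

lemma prefix_le': "process p \<Longrightarrow> prefix s x \<Longrightarrow> p x \<le> p s"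
  by (auto simp: prefix_def intro: prefix_le)

lemma W_prefix: "length s \<le> m \<Longrightarrow> {x\<in>W m. prefix s x} = (\<lambda>t. s @ t) ` W (m - length s)"
  by (auto simp: prefix_def image_iff)

lemma sum_prefix:
  assumes "process p" "length s \<le> m"
  shows "(\<Sum>x\<in>{x\<in>W m. prefix s x}. p x) = p s"
proof -
  have "(\<Sum>x\<in>{x\<in>W m. prefix s x}. p x) = (\<Sum>t\<in>W (m - length s). p (s @ t))"
    unfolding W_prefix[OF assms(2)] by (simp add: sum.reindex inj_on_def)
  then show ?thesis using ext_sum[OF assms(1), where k="m - length s" and s=s] by simp
qed

lemma finite_len_le: "finite {s::'a::finite list. length s \<le> m}"
proof -
  have "{s::'a list. length s \<le> m} = (\<Union>i\<le>m. W i)" by auto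
  then show ?thesis by (simp add: finite_W)
qed

lemma leaves_unique:
  "is_leaf \<phi> s \<Longrightarrow> is_leaf \<phi> s' \<Longrightarrow> prefix s x \<Longrightarrow> prefix s' x \<Longrightarrow> s = s'"
  unfolding is_leaf_def
  by (metis prefix_order.le_less prefix_same_cases)

lemma leaf_sum:
  fixes p :: "'a::finite list \<Rightarrow> real"
  assumes "process p"
  shows "(\<Sum>s\<in>{s. is_leaf \<phi> s \<and> length s \<le> m \<and> P s}. p s)
       = (\<Sum>x\<in>{x\<in>W m. \<exists>s. is_leaf \<phi> s \<and> P s \<and> prefix s x}. p x)"
proof -
  define L where "L = {s. is_leaf \<phi> s \<and> length s \<le> m \<and> P s}"
  have fL: "finite L" unfolding L_def by (rule finite_subset[OF _ finite_len_le[of m]]) auto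
  have "(\<Sum>s\<in>L. p s) = (\<Sum>s\<in>L. \<Sum>x\<in>W m. if prefix s x then p x else 0)"
  proof (rule sum.cong[OF refl])
    fix s assume "s \<in> L"
    hence len: "length s \<le> m" by (simp add: L_def)
    show "p s = (\<Sum>x\<in>W m. if prefix s x then p x else 0)"
      using sum_prefix[OF assms len] sum.inter_filter[OF finite_W, where P="prefix s" and g=p] by simp
  qed
  also have "\<dots> = (\<Sum>x\<in>W m. \<Sum>s\<in>L. if prefix s x then p x else 0)"
    by (rule sum.swap)
  also have "\<dots> = (\<Sum>x\<in>W m. if \<exists>s. is_leaf \<phi> s \<and> P s \<and> prefix s x then p x else 0)"
  proof (rule sum.cong)
    fix x :: "'a list" assume x: "x \<in> W m"
    show "(\<Sum>s\<in>L. if prefix s x then p x else 0) = (if \<exists>s. is_leaf \<phi> s \<and> P s \<and> prefix s x then p x else 0)"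
    proof (cases "\<exists>s. is_leaf \<phi> s \<and> P s \<and> prefix s x")
      case True
      then obtain s where s: "is_leaf \<phi> s" "P s" "prefix s x" by blast
      have sL: "s \<in> L" using s x prefix_length_le unfolding L_def by fastforce
      have "(\<Sum>s'\<in>L. if prefix s' x then p x else 0) = (\<Sum>s'\<in>{s}. if prefix s' x then p x else 0)"
        by (rule sum.mono_neutral_right) (use fL sL s leaves_unique in \<open>auto simp: L_def\<close>)
      then show ?thesis using True s by simp
    next
      case False
      have eq: "(\<Sum>s'\<in>L. if prefix s' x then p x else 0) = 0"
        by (rule sum.neutral) (use False in \<open>auto simp: L_def\<close>)
      show ?thesis unfolding if_not_P[OF False] by (rule eq)
    qed
  qed simp
  also have "\<dots> = (\<Sum>x\<in>{x\<in>W m. \<exists>s. is_leaf \<phi> s \<and> P s \<and> prefix s x}. p x)"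
    using sum.inter_filter[OF finite_W, where P="\<lambda>x. \<exists>s. is_leaf \<phi> s \<and> P s \<and> prefix s x" and g=p] by simp
  finally show ?thesis unfolding L_def .
qed


section \<open>Entropy quantities\<close>

lemma info_rate_eq: "info_rate p n xs = - log 2 (p xs) / real n"
  unfolding info_rate_def by (simp add: log_inverse divide_inverse[of 1, simplified])

lemma info_nonneg: assumes "process p" shows "0 \<le> info_rate p n xs"
proof -
  have "log 2 (p xs) \<le> 0"
    using process_nonneg[OF assms, of xs] process_le1[OF assms, of xs]
    by (cases "p xs = 0") (auto simp: log_def divide_nonpos_pos)
  then show ?thesis unfolding info_rate_eq by (simp add: divide_nonpos_nonneg)
qed

lemma log2_le_iff: "0 < x \<Longrightarrow> log 2 x \<le> y \<longleftrightarrow> x \<le> 2 powr y"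
  using less_log_iff[of 2 x y] by linarith

lemma info_ge_iff:
  assumes "0 < p xs" "0 < n"
  shows "l \<le> info_rate p n xs \<longleftrightarrow> p xs \<le> 2 powr (- (real n * l))"
proof -
  have "l \<le> info_rate p n xs \<longleftrightarrow> real n * l \<le> - log 2 (p xs)"
    unfolding info_rate_eq using assms(2) by (simp add: field_simps)
  also have "\<dots> \<longleftrightarrow> log 2 (p xs) \<le> - (real n * l)" by linarith
  also have "\<dots> \<longleftrightarrow> p xs \<le> 2 powr (- (real n * l))" using log2_le_iff[OF assms(1)] by simp
  finally show ?thesis .
qed

lemma info_le_iff:
  assumes "0 < p xs" "0 < n"
  shows "info_rate p n xs \<le> l \<longleftrightarrow> 2 powr (- (real n * l)) \<le> p xs"
proof -
  have "info_rate p n xs \<le> l \<longleftrightarrow> - log 2 (p xs) \<le> real n * l"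
    unfolding info_rate_eq using assms(2) by (simp add: field_simps)
  also have "\<dots> \<longleftrightarrow> - (real n * l) \<le> log 2 (p xs)" by linarith
  also have "\<dots> \<longleftrightarrow> 2 powr (- (real n * l)) \<le> p xs" using le_log_iff[OF _ assms(1)] by simp
  finally show ?thesis .
qed

lemma prob_len_nonneg: "process p \<Longrightarrow> 0 \<le> prob_len p n Q"
  unfolding prob_len_def by (rule sum_nonneg) (simp add: process_nonneg)

lemma prob_len_compl: assumes "process p"
  shows "prob_len p n Q + prob_len p n (\<lambda>x. \<not> Q x) = 1"
proof -
  have "prob_len p n Q + prob_len p n (\<lambda>x. \<not> Q x) = (\<Sum>x\<in>W n. p x)"
    unfolding prob_len_def
    by (subst sum.union_disjoint[symmetric]) (auto intro: finite_subset[OF _ finite_W] intro!: sum.cong)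
  then show ?thesis using sum_W[OF assms] by simp
qed

lemma prob_len_le1: "process p \<Longrightarrow> prob_len p n Q \<le> 1"
  using prob_len_compl[of p n Q] prob_len_nonneg[of p n "\<lambda>x. \<not> Q x"] by linarith

lemma prob_len_mono: assumes "process p" "\<And>x. length x = n \<Longrightarrow> Q x \<Longrightarrow> Q' x"
  shows "prob_len p n Q \<le> prob_len p n Q'"
  unfolding prob_len_def
  by (rule sum_mono2) (use assms in \<open>auto intro: finite_subset[OF _ finite_W] process_nonneg\<close>)

definition Ssup :: "('a::finite list \<Rightarrow> real) \<Rightarrow> real set" where
  "Ssup p = {l. (\<lambda>n. prob_len p n (\<lambda>xs. info_rate p n xs \<ge> l)) \<longlonglongrightarrow> 0}"

definition Sinf :: "('a::finite list \<Rightarrow> real) \<Rightarrow> real set" where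
  "Sinf p = {l. (\<lambda>n. prob_len p n (\<lambda>xs. info_rate p n xs \<le> l)) \<longlonglongrightarrow> 0}"

lemma sandwich0: "(\<And>n. 0 \<le> f n) \<Longrightarrow> (\<And>n. f n \<le> g n) \<Longrightarrow> g \<longlonglongrightarrow> (0::real) \<Longrightarrow> f \<longlonglongrightarrow> 0"
  by (rule tendsto_sandwich[of "\<lambda>_. 0" f sequentially g 0]) auto

lemma Ssup_up: assumes "process p" "l \<in> Ssup p" "l \<le> l'" shows "l' \<in> Ssup p"
  using assms unfolding Ssup_def
  by (auto intro!: sandwich0[where g="\<lambda>n. prob_len p n (\<lambda>xs. info_rate p n xs \<ge> l)"]
       prob_len_nonneg prob_len_mono)

lemma Sinf_down: assumes "process p" "l \<in> Sinf p" "l' \<le> l" shows "l' \<in> Sinf p"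
  using assms unfolding Sinf_def
  by (auto intro!: sandwich0[where g="\<lambda>n. prob_len p n (\<lambda>xs. info_rate p n xs \<le> l)"]
       prob_len_nonneg prob_len_mono)

lemma Ssup_pos: assumes "process p" "l \<in> Ssup p" shows "0 < l"
proof (rule ccontr)
  assume l: "\<not> 0 < l"
  have "\<And>n xs. l \<le> info_rate p n xs" using info_nonneg[OF assms(1)] l by (smt (verit))
  then have "\<And>n. {xs. length xs = n \<and> l \<le> info_rate p n xs} = W n" by auto
  then have "\<And>n. prob_len p n (\<lambda>xs. info_rate p n xs \<ge> l) = 1"
    unfolding prob_len_def using sum_W[OF assms(1)] by simp
  then show False using assms(2) unfolding Ssup_def by (simp add: LIMSEQ_const_iff)
qed

lemma Sinf_neg: assumes "process p" "l < 0" shows "l \<in> Sinf p"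
proof -
  have "\<And>n xs. \<not> info_rate p n xs \<le> l" using info_nonneg[OF assms(1)] assms(2) by (smt (verit))
  then have "\<And>n. prob_len p n (\<lambda>xs. info_rate p n xs \<le> l) = 0"
    unfolding prob_len_def by simp
  then show ?thesis unfolding Sinf_def by simp
qed


lemma card_W: "card (W n :: 'a::finite list set) = CARD('a) ^ n"
  using card_lists_length_eq[of "UNIV::'a set" n] by simp

lemma Ssup_ne: assumes "process (p::'a::finite list \<Rightarrow> real)"
  shows "log 2 (2 * real CARD('a)) \<in> Ssup p"
proof -
  define c where "c = real CARD('a)"
  have c1: "c \<ge> 1" unfolding c_def by simp
  define l0 where "l0 = log 2 (2*c)"
  have bound: "p xs \<le> inverse ((2*c)^n)" if n: "0<n" and h: "l0 \<le> info_rate p n xs" for n xs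
  proof (cases "p xs = 0")
    case True then show ?thesis using c1 by simp
  next
    case False
    hence pos: "0 < p xs" using process_nonneg[OF assms, of xs] by (simp add: less_le)
    have "2 powr (real n * l0) = (2 powr l0) powr real n" by (simp add: powr_powr mult.commute)
    also have "\<dots> = (2*c) ^ n" unfolding l0_def using c1 by (simp add: powr_realpow)
    finally have e: "2 powr (real n * l0) = (2*c) ^ n" .
    have "p xs \<le> 2 powr (-(real n * l0))" using h info_ge_iff[where p=p and xs=xs, OF pos n] by simp
    then show ?thesis unfolding powr_minus e .
  qed
  have le: "prob_len p n (\<lambda>xs. l0 \<le> info_rate p n xs) \<le> (1/2)^n" for n
  proof (cases "n = 0")
    case True then show ?thesis using prob_len_le1[OF assms] by simp
  next
    case False
    have "prob_len p n (\<lambda>xs. l0 \<le> info_rate p n xs) \<le> (\<Sum>xs\<in>{xs. length xs = n \<and> l0 \<le> info_rate p n xs}. inverse ((2*c)^n))"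
      unfolding prob_len_def by (rule sum_mono) (use bound False in auto)
    also have "\<dots> \<le> (\<Sum>xs\<in>(W n :: 'a list set). inverse ((2*c)^n))"
    proof -
      have "card {xs. length xs = n \<and> l0 \<le> info_rate p n xs} \<le> card (W n :: 'a list set)"
        by (rule card_mono[OF finite_W]) auto
      then show ?thesis using c1 by (simp add: mult_right_mono)
    qed
    also have "\<dots> = c^n * inverse ((2*c)^n)" by (simp add: card_W c_def)
    also have "\<dots> = (1/2)^n" using c1 by (simp add: power_mult_distrib field_simps)
    finally show ?thesis .
  qed
  have "(\<lambda>n. prob_len p n (\<lambda>xs. l0 \<le> info_rate p n xs)) \<longlonglongrightarrow> 0"
    by (rule sandwich0[OF prob_len_nonneg[OF assms] le]) (rule LIMSEQ_realpow_zero, auto)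
  then show ?thesis unfolding Ssup_def l0_def c_def by simp
qed

lemma Sinf_lt_Ssup: assumes "process p" "l \<in> Sinf p" "l' \<in> Ssup p" shows "l < l'"
proof (rule ccontr)
  assume "\<not> l < l'"
  hence le: "\<And>n. prob_len p n (\<lambda>xs. \<not> info_rate p n xs \<le> l) \<le> prob_len p n (\<lambda>xs. info_rate p n xs \<ge> l')"
    by (intro prob_len_mono[OF assms(1)]) auto
  have "(\<lambda>n. prob_len p n (\<lambda>xs. info_rate p n xs \<le> l) + prob_len p n (\<lambda>xs. info_rate p n xs \<ge> l')) \<longlonglongrightarrow> 0 + 0"
    using assms(2,3) unfolding Sinf_def Ssup_def by (intro tendsto_add) auto
  moreover have "1 \<le> prob_len p n (\<lambda>xs. info_rate p n xs \<le> l) + prob_len p n (\<lambda>xs. info_rate p n xs \<ge> l')" for n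
    using le[of n] prob_len_compl[OF assms(1), of n "\<lambda>xs. info_rate p n xs \<le> l"] by linarith
  ultimately have "1 \<le> (0::real)"
    using LIMSEQ_le_const by fastforce
  then show False by simp
qed

lemma Ssup_bdd: "process p \<Longrightarrow> bdd_below (Ssup p)"
  by (rule bdd_belowI[of _ 0]) (auto dest: Ssup_pos)

lemma Sinf_bdd: assumes "process (p::'a::finite list \<Rightarrow> real)" shows "bdd_above (Sinf p)"
  by (rule bdd_aboveI[of _ "log 2 (2 * real CARD('a))"])
     (use Sinf_lt_Ssup[OF assms _ Ssup_ne[OF assms]] in \<open>auto intro: less_imp_le\<close>)

lemma sup_entropy_nonneg: assumes "process p" shows "0 \<le> sup_entropy p"
  unfolding sup_entropy_def
  by (rule cInf_greatest) (use Ssup_ne[OF assms] Ssup_pos[OF assms] in \<open>auto simp: Ssup_def intro: less_imp_le\<close>)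

lemma sup_above: assumes "process p" "sup_entropy p < l" shows "l \<in> Ssup p"
proof -
  have "Ssup p \<noteq> {}" using Ssup_ne[OF assms(1)] by auto
  then obtain l' where "l' \<in> Ssup p" "l' < l"
    using cInf_lessD[of "Ssup p" l] assms(2) unfolding sup_entropy_def Ssup_def by auto
  then show ?thesis using Ssup_up[OF assms(1)] by auto
qed

lemma sup_below: assumes "process p" "l < sup_entropy p" shows "l \<notin> Ssup p"
  using cInf_lower[OF _ Ssup_bdd[OF assms(1)], of l] assms(2) unfolding sup_entropy_def Ssup_def by auto

lemma inf_below: assumes "process p" "l < inf_entropy p" shows "l \<in> Sinf p"
proof -
  have "Sinf p \<noteq> {}" using Sinf_neg[OF assms(1), of "-1"] by auto
  then obtain l' where "l' \<in> Sinf p" "l < l'"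
    using less_cSupD[of "Sinf p" l] assms(2) unfolding inf_entropy_def Sinf_def by auto
  then show ?thesis using Sinf_down[OF assms(1)] by auto
qed

lemma inf_above: assumes "process p" "inf_entropy p < l" shows "l \<notin> Sinf p"
  using cSup_upper[OF _ Sinf_bdd[OF assms(1)], of l] assms(2) unfolding inf_entropy_def Sinf_def by auto

lemma inf_entropy_nonneg: assumes "process p" shows "0 \<le> inf_entropy p"
proof (rule ccontr)
  assume "\<not> 0 \<le> inf_entropy p"
  hence "inf_entropy p / 2 \<in> Sinf p" by (intro Sinf_neg[OF assms]) auto
  moreover have "inf_entropy p < inf_entropy p / 2" using \<open>\<not> 0 \<le> inf_entropy p\<close> by simp
  ultimately show False using inf_above[OF assms] by blast
qed


section \<open>Stopping times\<close>

lemma has_sum_sub: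
  fixes f :: "'a \<Rightarrow> real"
  assumes "(f has_sum S) A" "finite F" "F \<subseteq> A" "\<And>x. x \<in> A \<Longrightarrow> 0 \<le> f x"
  shows "sum f F \<le> S"
  by (rule has_sum_mono2[OF has_sum_finite[OF assms(2)] assms(1) assms(3)]) (use assms(4) in auto)

lemma sum_le_filter:
  fixes f :: "'a \<Rightarrow> real"
  assumes "finite U" "\<And>x. x \<in> U \<Longrightarrow> 0 \<le> f x" "\<And>x. x \<in> U \<Longrightarrow> P x \<Longrightarrow> 0 < f x \<Longrightarrow> Q x"
  shows "(\<Sum>x\<in>{x\<in>U. P x}. f x) \<le> (\<Sum>x\<in>{x\<in>U. Q x}. f x)"
proof -
  have "(\<Sum>x\<in>{x\<in>U. P x}. f x) = (\<Sum>x\<in>U. if P x then f x else 0)"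
    by (rule sum.inter_filter[OF assms(1)])
  also have "\<dots> \<le> (\<Sum>x\<in>U. if Q x then f x else 0)"
  proof (rule sum_mono)
    fix x assume x: "x \<in> U"
    show "(if P x then f x else 0) \<le> (if Q x then f x else 0)"
      using assms(2)[OF x] assms(3)[OF x] by (cases "f x = 0") auto
  qed
  also have "\<dots> = (\<Sum>x\<in>{x\<in>U. Q x}. f x)"
    by (rule sum.inter_filter[OF assms(1), symmetric])
  finally show ?thesis .
qed

lemma nat_floor_le: "0 \<le> t \<Longrightarrow> (k \<le> nat \<lfloor>t\<rfloor>) = (real k \<le> t)"
  by (simp add: le_nat_iff le_floor_iff)

lemma leaf_set_eq: "0 \<le> t \<Longrightarrow> {s. is_leaf \<phi> s \<and> real (length s) \<le> t} = {s. is_leaf \<phi> s \<and> length s \<le> nat \<lfloor>t\<rfloor> \<and> True}"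
  using nat_floor_le by auto

lemma stop_exceeds_eq:
  assumes "process p" "0 \<le> t"
  shows "stop_exceeds p \<phi> t = (\<Sum>x\<in>{x\<in>W (nat \<lfloor>t\<rfloor>). \<not> (\<exists>s. is_leaf \<phi> s \<and> prefix s x)}. p x)"
proof -
  define m where "m = nat \<lfloor>t\<rfloor>"
  have "stop_exceeds p \<phi> t = 1 - (\<Sum>x\<in>{x\<in>W m. \<exists>s. is_leaf \<phi> s \<and> True \<and> prefix s x}. p x)"
    unfolding stop_exceeds_def leaf_set_eq[OF assms(2)] leaf_sum[OF assms(1)] m_def ..
  also have "\<dots> = (\<Sum>x\<in>{x\<in>W m. \<not> (\<exists>s. is_leaf \<phi> s \<and> prefix s x)}. p x)"
    using prob_len_compl[OF assms(1), of m "\<lambda>x. \<exists>s. is_leaf \<phi> s \<and> prefix s x"]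
    unfolding prob_len_def by simp
  finally show ?thesis unfolding m_def .
qed

lemma stop_exceeds_neg: "t < 0 \<Longrightarrow> stop_exceeds p \<phi> t = 1"
  unfolding stop_exceeds_def by (simp add: not_le[symmetric])

lemma stop_exceeds_nonneg: assumes "process p" shows "0 \<le> stop_exceeds p \<phi> t"
proof (cases "t < 0")
  case True then show ?thesis by (simp add: stop_exceeds_neg)
next
  case False then show ?thesis
    by (simp add: stop_exceeds_eq[OF assms] sum_nonneg process_nonneg[OF assms])
qed

lemma finite_leaf_set: "finite {s::'a::finite list. is_leaf \<phi> s \<and> real (length s) \<le> t}"
proof -
  have "{s::'a list. is_leaf \<phi> s \<and> real (length s) \<le> t} \<subseteq> {s. length s \<le> nat \<lfloor>t\<rfloor>}"
  proof
    fix s :: "'a list" assume "s \<in> {s. is_leaf \<phi> s \<and> real (length s) \<le> t}"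
    then have "real (length s) \<le> t" by simp
    moreover then have "0 \<le> t" by (meson of_nat_0_le_iff order_trans)
    ultimately show "s \<in> {s. length s \<le> nat \<lfloor>t\<rfloor>}" using nat_floor_le by auto
  qed
  then show ?thesis using finite_subset finite_len_le by blast
qed

lemma stop_exceeds_mono: assumes "process p" "t \<le> t'" shows "stop_exceeds p \<phi> t' \<le> stop_exceeds p \<phi> t"
proof -
  have "(\<Sum>s\<in>{s. is_leaf \<phi> s \<and> real (length s) \<le> t}. p s) \<le> (\<Sum>s\<in>{s. is_leaf \<phi> s \<and> real (length s) \<le> t'}. p s)"
    by (rule sum_mono2[OF finite_leaf_set]) (use assms in \<open>auto simp: process_nonneg\<close>)
  then show ?thesis unfolding stop_exceeds_def by simp
qed

lemma achievable_mono:
  assumes "process p" "achievable_by p \<Phi> R" "R \<le> R'" shows "achievable_by p \<Phi> R'"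
proof -
  have "stop_exceeds p (\<Phi> n) (real n * R') \<le> stop_exceeds p (\<Phi> n) (real n * R)" for n
    using mult_left_mono[OF assms(3), of "real n"] by (intro stop_exceeds_mono[OF assms(1)]) simp
  then show ?thesis using assms(2) unfolding achievable_by_def
    by (intro sandwich0[OF stop_exceeds_nonneg[OF assms(1)]]) auto
qed

lemma not_achievable_neg: assumes "R < 0" shows "\<not> achievable_by p \<Phi> R"
proof
  assume "achievable_by p \<Phi> R"
  hence "(\<lambda>n. stop_exceeds p (\<Phi> (Suc n)) (real (Suc n) * R)) \<longlonglongrightarrow> 0"
    unfolding achievable_by_def by (rule LIMSEQ_Suc)
  moreover have "\<And>n. stop_exceeds p (\<Phi> (Suc n)) (real (Suc n) * R) = 1"
    using assms by (intro stop_exceeds_neg) (simp add: mult_pos_neg)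
  ultimately show False by (simp add: LIMSEQ_const_iff)
qed


section \<open>Converse bounds\<close>

lemma sum_filter_disj:
  fixes f :: "'a \<Rightarrow> real"
  assumes "finite U" "\<And>x. x \<in> U \<Longrightarrow> 0 \<le> f x"
  shows "(\<Sum>x\<in>{x\<in>U. A x \<or> C x}. f x) \<le> (\<Sum>x\<in>{x\<in>U. A x}. f x) + (\<Sum>x\<in>{x\<in>U. C x}. f x)"
proof -
  have "(\<Sum>x\<in>{x\<in>U. A x \<or> C x}. f x) = (\<Sum>x\<in>U. if A x \<or> C x then f x else 0)"
    by (rule sum.inter_filter[OF assms(1)])
  also have "\<dots> \<le> (\<Sum>x\<in>U. (if A x then f x else 0) + (if C x then f x else 0))"
    by (rule sum_mono) (use assms(2) in auto)
  also have "\<dots> = (\<Sum>x\<in>{x\<in>U. A x}. f x) + (\<Sum>x\<in>{x\<in>U. C x}. f x)"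
    by (simp add: sum.distrib sum.inter_filter[OF assms(1)])
  finally show ?thesis .
qed

lemma gen_leaf_le:
  assumes "generates pX pY n \<phi>" "is_leaf \<phi> s" "\<phi> s = Some y" "process pX"
  shows "pX s \<le> pY y"
proof -
  have hs: "(pX has_sum pY y) {s. is_leaf \<phi> s \<and> \<phi> s = Some y}"
    using assms(1,3) unfolding generates_def by blast
  show ?thesis using has_sum_sub[OF hs, of "{s}"] assms(2,3) process_nonneg[OF assms(4)] by auto
qed

lemma gen_out_len: "generates pX pY n \<phi> \<Longrightarrow> \<phi> s = Some y \<Longrightarrow> length y = n"
  unfolding generates_def by blast

lemma leaf_some: "is_leaf \<phi> s \<Longrightarrow> \<phi> s = Some (the (\<phi> s))"
  unfolding is_leaf_def by auto

definition Lset :: "('a list \<Rightarrow> 'b list option) \<Rightarrow> nat \<Rightarrow> ('b list \<Rightarrow> bool) \<Rightarrow> 'a list set" where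
  "Lset \<phi> m P = {s. is_leaf \<phi> s \<and> length s \<le> m \<and> P (the (\<phi> s))}"

lemma finite_Lset: "finite (Lset \<phi> m P :: 'a::finite list set)"
  unfolding Lset_def by (rule finite_subset[OF _ finite_len_le[of m]]) auto

lemma gen_group:
  fixes pX :: "'a::finite list \<Rightarrow> real" and pY :: "'b::finite list \<Rightarrow> real"
  assumes "generates pX pY n \<phi>" "B \<subseteq> W n"
  shows "(\<Sum>y\<in>B. \<Sum>s\<in>Lset \<phi> m (\<lambda>z. z = y). pX s) = (\<Sum>s\<in>Lset \<phi> m (\<lambda>z. z \<in> B). pX s)"
proof -
  have fB: "finite B" using assms(2) finite_subset finite_W by blast
  have "(\<Sum>y\<in>B. \<Sum>s\<in>{s. s \<in> Lset \<phi> m (\<lambda>z. z \<in> B) \<and> the (\<phi> s) = y}. pX s) = (\<Sum>s\<in>Lset \<phi> m (\<lambda>z. z \<in> B). pX s)"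
    by (rule sum.group[OF finite_Lset fB]) (auto simp: Lset_def)
  moreover have "\<And>y. y \<in> B \<Longrightarrow> {s. s \<in> Lset \<phi> m (\<lambda>z. z \<in> B) \<and> the (\<phi> s) = y} = Lset \<phi> m (\<lambda>z. z = y)"
    by (auto simp: Lset_def)
  ultimately show ?thesis by simp
qed

lemma gen_single_le:
  fixes pX :: "'a::finite list \<Rightarrow> real" and pY :: "'b::finite list \<Rightarrow> real"
  assumes "generates pX pY n \<phi>" "process pX" "length y = n"
  shows "(\<Sum>s\<in>Lset \<phi> m (\<lambda>z. z = y). pX s) \<le> pY y"
proof -
  have hs: "(pX has_sum pY y) {s. is_leaf \<phi> s \<and> \<phi> s = Some y}"
    using assms(1,3) unfolding generates_def by blast
  show ?thesis
    by (rule has_sum_sub[OF hs finite_Lset]) (use leaf_some process_nonneg[OF assms(2)] in \<open>auto simp: Lset_def\<close>)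
qed

lemma gen_B_le:
  fixes pX :: "'a::finite list \<Rightarrow> real" and pY :: "'b::finite list \<Rightarrow> real"
  assumes "generates pX pY n \<phi>" "process pX" "B \<subseteq> W n"
  shows "(\<Sum>s\<in>Lset \<phi> m (\<lambda>z. z \<in> B). pX s) \<le> (\<Sum>y\<in>B. pY y)"
  unfolding gen_group[OF assms(1,3), symmetric]
  by (rule sum_mono) (use gen_single_le[OF assms(1,2)] assms(3) in auto)

lemma gen_B_ge:
  fixes pX :: "'a::finite list \<Rightarrow> real" and pY :: "'b::finite list \<Rightarrow> real"
  assumes "generates pX pY n \<phi>" "process pX" "process pY" "B \<subseteq> W n"
  shows "(\<Sum>y\<in>B. pY y) \<le> (\<Sum>s\<in>Lset \<phi> m (\<lambda>z. z \<in> B). pX s) + (1 - (\<Sum>s\<in>Lset \<phi> m (\<lambda>z. True). pX s))"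
proof -
  define G where "G y = (\<Sum>s\<in>Lset \<phi> m (\<lambda>z. z = y). pX s)" for y
  have GB: "(\<Sum>y\<in>B. G y) = (\<Sum>s\<in>Lset \<phi> m (\<lambda>z. z \<in> B). pX s)"
    unfolding G_def by (rule gen_group[OF assms(1,4)])
  have "Lset \<phi> m (\<lambda>z. z \<in> W n) = Lset \<phi> m (\<lambda>z. True)"
  proof -
    have "length (the (\<phi> s)) = n" if "is_leaf \<phi> s" for s
      using gen_out_len[OF assms(1) leaf_some[OF that]] .
    then show ?thesis unfolding Lset_def by auto
  qed
  then have GW: "(\<Sum>y\<in>W n. G y) = (\<Sum>s\<in>Lset \<phi> m (\<lambda>z. True). pX s)"
    unfolding G_def using gen_group[OF assms(1), of "W n" m] by simp
  have Gle: "\<And>y. y \<in> W n \<Longrightarrow> G y \<le> pY y"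
    unfolding G_def using gen_single_le[OF assms(1,2)] by auto
  have fB: "finite B" using assms(4) finite_subset finite_W by blast
  have "(\<Sum>y\<in>B. pY y) = (\<Sum>y\<in>B. G y) + (\<Sum>y\<in>B. pY y - G y)"
    by (simp add: sum_subtractf)
  also have "(\<Sum>y\<in>B. pY y - G y) \<le> (\<Sum>y\<in>W n. pY y - G y)"
    by (rule sum_mono2[OF finite_W assms(4)]) (use Gle in auto)
  also have "\<dots> = 1 - (\<Sum>y\<in>W n. G y)"
    using sum_W[OF assms(3), of n] by (simp add: sum_subtractf)
  finally show ?thesis unfolding GB GW by simp
qed

lemma Lset_True_leaf: "Lset \<phi> m (\<lambda>z. True) = {s. is_leaf \<phi> s \<and> length s \<le> m \<and> True}"
  unfolding Lset_def by simp

lemma stop_exceeds_Lset: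
  assumes "process p" "0 \<le> t"
  shows "stop_exceeds p \<phi> t = 1 - (\<Sum>s\<in>Lset \<phi> (nat \<lfloor>t\<rfloor>) (\<lambda>z. True). p s)"
  unfolding stop_exceeds_def leaf_set_eq[OF assms(2)] Lset_True_leaf ..

lemma Lset_words:
  assumes "process p"
  shows "(\<Sum>s\<in>Lset \<phi> m P. p s) = (\<Sum>x\<in>{x\<in>W m. \<exists>s. is_leaf \<phi> s \<and> P (the (\<phi> s)) \<and> prefix s x}. p x)"
  unfolding Lset_def by (rule leaf_sum[OF assms])


lemma core_sup:
  fixes pX :: "'a::finite list \<Rightarrow> real" and pY :: "'b::finite list \<Rightarrow> real"
  assumes gen: "generates pX pY n \<phi>" and pX: "process pX" and pY: "process pY"
    and n: "0 < n" and m: "0 < m" and ml: "real m * lX \<le> real n * lY"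
  shows "prob_len pY n (\<lambda>y. lY \<le> info_rate pY n y)
     \<le> prob_len pX m (\<lambda>x. lX \<le> info_rate pX m x) + (1 - (\<Sum>s\<in>Lset \<phi> m (\<lambda>z. True). pX s))"
proof -
  define B where "B = {y\<in>W n. lY \<le> info_rate pY n y}"
  have BW: "B \<subseteq> W n" unfolding B_def by auto
  have e1: "prob_len pY n (\<lambda>y. lY \<le> info_rate pY n y) = (\<Sum>y\<in>B. pY y)"
    by (simp add: prob_len_def B_def)
  have e2: "(\<Sum>y\<in>B. pY y) \<le> (\<Sum>s\<in>Lset \<phi> m (\<lambda>z. z \<in> B). pX s) + (1 - (\<Sum>s\<in>Lset \<phi> m (\<lambda>z. True). pX s))"
    by (rule gen_B_ge[OF gen pX pY BW])
  have e3: "(\<Sum>s\<in>Lset \<phi> m (\<lambda>z. z \<in> B). pX s) = (\<Sum>x\<in>{x\<in>W m. \<exists>s. is_leaf \<phi> s \<and> the (\<phi> s) \<in> B \<and> prefix s x}. pX x)"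
    by (rule Lset_words[OF pX])
  have e4: "(\<Sum>x\<in>{x\<in>W m. \<exists>s. is_leaf \<phi> s \<and> the (\<phi> s) \<in> B \<and> prefix s x}. pX x)
          \<le> (\<Sum>x\<in>{x\<in>W m. lX \<le> info_rate pX m x}. pX x)"
  proof (rule sum_le_filter[OF finite_W])
    show "\<And>x. 0 \<le> pX x" by (rule process_nonneg[OF pX])
  next
    fix x assume x: "x \<in> W m" and ex: "\<exists>s. is_leaf \<phi> s \<and> the (\<phi> s) \<in> B \<and> prefix s x" and pos: "0 < pX x"
    from ex obtain s where s: "is_leaf \<phi> s" "the (\<phi> s) \<in> B" "prefix s x" by blast
    define y where "y = the (\<phi> s)"
    have sy: "\<phi> s = Some y" using leaf_some[OF s(1)] unfolding y_def .
    have a1: "pX x \<le> pX s" by (rule prefix_le'[OF pX s(3)])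
    have a2: "pX s \<le> pY y" by (rule gen_leaf_le[OF gen s(1) sy pX])
    have ypos: "0 < pY y" using a1 a2 pos by linarith
    have yB: "lY \<le> info_rate pY n y" using s(2) unfolding y_def B_def by simp
    have a3: "pY y \<le> 2 powr (-(real n * lY))" using yB info_ge_iff[where p=pY and xs=y, OF ypos n] by simp
    have a4: "2 powr (-(real n * lY)) \<le> 2 powr (-(real m * lX))" using ml by (intro powr_mono) auto
    have "pX x \<le> 2 powr (-(real m * lX))" using a1 a2 a3 a4 by linarith
    then show "lX \<le> info_rate pX m x" using info_ge_iff[where p=pX and xs=x, OF pos m] by simp
  qed
  have e5: "(\<Sum>x\<in>{x\<in>W m. lX \<le> info_rate pX m x}. pX x) = prob_len pX m (\<lambda>x. lX \<le> info_rate pX m x)"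
    by (simp add: prob_len_def)
  show ?thesis using e1 e2 e3 e4 e5 by linarith
qed

lemma core_inf:
  fixes pX :: "'a::finite list \<Rightarrow> real" and pY :: "'b::finite list \<Rightarrow> real"
  assumes gen: "generates pX pY n \<phi>" and pX: "process pX" and pY: "process pY"
    and n: "0 < n" and m: "0 < m" and ml: "real m * l1 \<le> real n * lY"
  shows "prob_len pX m (\<lambda>x. info_rate pX m x \<le> l1)
     \<le> (1 - (\<Sum>s\<in>Lset \<phi> m (\<lambda>z. True). pX s)) + prob_len pY n (\<lambda>y. info_rate pY n y \<le> lY)"
proof -
  define B where "B = {y\<in>W n. info_rate pY n y \<le> lY}"
  have BW: "B \<subseteq> W n" unfolding B_def by auto
  define A where "A x = (\<not> (\<exists>s. is_leaf \<phi> s \<and> True \<and> prefix s x))" for x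
  define C where "C x = (\<exists>s. is_leaf \<phi> s \<and> the (\<phi> s) \<in> B \<and> prefix s x)" for x
  have e0: "prob_len pX m (\<lambda>x. info_rate pX m x \<le> l1) = (\<Sum>x\<in>{x\<in>W m. info_rate pX m x \<le> l1}. pX x)"
    by (simp add: prob_len_def)
  have e1: "(\<Sum>x\<in>{x\<in>W m. info_rate pX m x \<le> l1}. pX x) \<le> (\<Sum>x\<in>{x\<in>W m. A x \<or> C x}. pX x)"
  proof (rule sum_le_filter[OF finite_W])
    show "\<And>x. 0 \<le> pX x" by (rule process_nonneg[OF pX])
  next
    fix x assume x: "x \<in> W m" and inf: "info_rate pX m x \<le> l1" and pos: "0 < pX x"
    show "A x \<or> C x"
    proof (cases "A x")
      case False
      then obtain s where s: "is_leaf \<phi> s" "prefix s x" unfolding A_def by blast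
      define y where "y = the (\<phi> s)"
      have sy: "\<phi> s = Some y" using leaf_some[OF s(1)] unfolding y_def .
      have yW: "length y = n" by (rule gen_out_len[OF gen sy])
      have a1: "pX x \<le> pX s" by (rule prefix_le'[OF pX s(2)])
      have a2: "pX s \<le> pY y" by (rule gen_leaf_le[OF gen s(1) sy pX])
      have ypos: "0 < pY y" using a1 a2 pos by linarith
      have a3: "2 powr (-(real m * l1)) \<le> pX x" using inf info_le_iff[where p=pX and xs=x, OF pos m] by simp
      have a4: "2 powr (-(real n * lY)) \<le> 2 powr (-(real m * l1))" using ml by (intro powr_mono) auto
      have "2 powr (-(real n * lY)) \<le> pY y" using a1 a2 a3 a4 by linarith
      then have "info_rate pY n y \<le> lY" using info_le_iff[where p=pY and xs=y, OF ypos n] by simp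
      then have "C x" unfolding C_def B_def using s yW y_def by blast
      then show ?thesis by simp
    qed simp
  qed
  have e2: "(\<Sum>x\<in>{x\<in>W m. A x \<or> C x}. pX x) \<le> (\<Sum>x\<in>{x\<in>W m. A x}. pX x) + (\<Sum>x\<in>{x\<in>W m. C x}. pX x)"
    by (rule sum_filter_disj[OF finite_W process_nonneg[OF pX]])
  have e3: "(\<Sum>x\<in>{x\<in>W m. A x}. pX x) = 1 - (\<Sum>s\<in>Lset \<phi> m (\<lambda>z. True). pX s)"
    using prob_len_compl[OF pX, of m "\<lambda>x. \<exists>s. is_leaf \<phi> s \<and> True \<and> prefix s x"]
      Lset_words[OF pX, of \<phi> m "\<lambda>z. True"]
    unfolding prob_len_def A_def by simp
  have e4: "(\<Sum>x\<in>{x\<in>W m. C x}. pX x) = (\<Sum>s\<in>Lset \<phi> m (\<lambda>z. z \<in> B). pX s)"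
    unfolding C_def by (rule Lset_words[OF pX, symmetric])
  have e5: "(\<Sum>s\<in>Lset \<phi> m (\<lambda>z. z \<in> B). pX s) \<le> (\<Sum>y\<in>B. pY y)"
    by (rule gen_B_le[OF gen pX BW])
  have e6: "(\<Sum>y\<in>B. pY y) = prob_len pY n (\<lambda>y. info_rate pY n y \<le> lY)"
    by (simp add: prob_len_def B_def)
  show ?thesis using e0 e1 e2 e3 e4 e5 e6 by linarith
qed


lemma nat_floor_bounds: assumes "0 \<le> t" shows "real (nat \<lfloor>t\<rfloor>) \<le> t" "t - 1 < real (nat \<lfloor>t\<rfloor>)"
proof -
  have e: "real (nat \<lfloor>t\<rfloor>) = real_of_int \<lfloor>t\<rfloor>" using assms by simp
  show "real (nat \<lfloor>t\<rfloor>) \<le> t" unfolding e by simp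
  show "t - 1 < real (nat \<lfloor>t\<rfloor>)" unfolding e by linarith
qed

lemma mR_lim: assumes "0 < R" shows "filterlim (\<lambda>n. nat \<lfloor>real n * R\<rfloor>) at_top sequentially"
  unfolding filterlim_at_top
proof
  fix Z :: nat
  obtain N :: nat where N: "real Z / R < real N" using reals_Archimedean2 by blast
  show "eventually (\<lambda>n. Z \<le> nat \<lfloor>real n * R\<rfloor>) sequentially"
    unfolding eventually_sequentially
  proof (intro exI allI impI)
    fix n assume "N \<le> n"
    then have "real Z / R < real n" using N by linarith
    then have "real Z \<le> real n * R" using assms by (simp add: field_simps)
    then show "Z \<le> nat \<lfloor>real n * R\<rfloor>" using nat_floor_le assms by simp
  qed
qed

lemma prob_len_mono':
  assumes "process p" "\<And>x. length x = n \<Longrightarrow> Q x \<Longrightarrow> 0 < p x \<Longrightarrow> Q' x"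
  shows "prob_len p n Q \<le> prob_len p n Q'"
proof -
  have "(\<Sum>x\<in>{x\<in>W n. Q x}. p x) \<le> (\<Sum>x\<in>{x\<in>W n. Q' x}. p x)"
    by (rule sum_le_filter[OF finite_W]) (use assms process_nonneg in auto)
  then show ?thesis by (simp add: prob_len_def)
qed

lemma prob_len_take:
  assumes "process p" "m \<le> k"
  shows "prob_len p k (\<lambda>x. Q (take m x)) = prob_len p m Q"
proof -
  define S where "S = {x\<in>W k. Q (take m x)}"
  define T where "T = {z\<in>W m. Q z}"
  have fS: "finite S" unfolding S_def by (rule finite_subset[OF _ finite_W[of k]]) auto
  have fT: "finite T" unfolding T_def by (rule finite_subset[OF _ finite_W[of m]]) auto
  have "(\<Sum>z\<in>T. \<Sum>x\<in>{x. x \<in> S \<and> take m x = z}. p x) = (\<Sum>x\<in>S. p x)"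
    by (rule sum.group[OF fS fT, where g="take m" and h=p]) (use assms(2) in \<open>auto simp: S_def T_def\<close>)
  moreover have "\<And>z. z \<in> T \<Longrightarrow> {x. x \<in> S \<and> take m x = z} = {x\<in>W k. prefix z x}"
    by (auto simp: S_def T_def prefix_def) (metis append_take_drop_id)
  moreover have "\<And>z. z \<in> T \<Longrightarrow> (\<Sum>x\<in>{x\<in>W k. prefix z x}. p x) = p z"
    using sum_prefix[OF assms(1)] assms(2) by (auto simp: T_def)
  ultimately have "(\<Sum>x\<in>S. p x) = (\<Sum>z\<in>T. p z)" by simp
  then show ?thesis by (simp add: prob_len_def S_def T_def)
qed


lemma pos_reduce:
  assumes pX: "process pX" and ach: "achievable_by pX \<Phi> R" and lt: "R * HX < HY" and HX: "0 \<le> HX"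
  shows "\<exists>R'. 0 < R' \<and> R' * HX < HY \<and> achievable_by pX \<Phi> R'"
proof -
  have R0: "0 \<le> R" using not_achievable_neg[of R pX \<Phi>] ach by linarith
  define d where "d = HY - R * HX"
  have d: "0 < d" using lt unfolding d_def by simp
  define R' where "R' = R + d / (2 * (HX + 1))"
  have q: "0 < d / (2 * (HX + 1))" using d HX by simp
  have "d / (2 * (HX + 1)) * HX < d"
  proof -
    have "d * HX < d * (2 * (HX + 1))" using d HX by (intro mult_strict_left_mono) auto
    then show ?thesis using HX by (simp add: divide_less_eq)
  qed
  then have "R' * HX < HY" unfolding R'_def d_def by (simp add: distrib_right)
  moreover have "0 < R'" using R0 q unfolding R'_def by simp
  moreover have "achievable_by pX \<Phi> R'" by (rule achievable_mono[OF pX ach]) (use q in \<open>simp add: R'_def\<close>)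
  ultimately show ?thesis by blast
qed

lemma conv_sup:
  fixes pX :: "'a::finite list \<Rightarrow> real" and pY :: "'b::finite list \<Rightarrow> real"
  assumes pX: "process pX" and pY: "process pY" and gen: "\<And>n. generates pX pY n (\<Phi> n)"
    and ach: "achievable_by pX \<Phi> R"
  shows "sup_entropy pY \<le> R * sup_entropy pX"
proof (rule ccontr)
  define HX where "HX = sup_entropy pX"
  define HY where "HY = sup_entropy pY"
  assume "\<not> sup_entropy pY \<le> R * sup_entropy pX"
  then have "R * HX < HY" unfolding HX_def HY_def by simp
  moreover have HX0: "0 \<le> HX" unfolding HX_def by (rule sup_entropy_nonneg[OF pX])
  ultimately obtain R' where R': "0 < R'" "R' * HX < HY" "achievable_by pX \<Phi> R'"
    using pos_reduce[OF pX ach] by blast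
  define eps where "eps = (HY - R' * HX) / (2 * (R' + 1))"
  have eps: "0 < eps" using R' unfolding eps_def by simp
  define lX where "lX = HX + eps"
  define lY where "lY = HY - eps"
  have lXpos: "0 < lX" using HX0 eps unfolding lX_def by simp
  have eq: "(R' + 1) * eps = (HY - R' * HX) / 2"
    using R'(1) unfolding eps_def by (simp add: field_simps)
  have "(HY - R' * HX) / 2 < HY - R' * HX" using R'(2) by (simp add: field_simps)
  then have "(R' + 1) * eps < HY - R' * HX" unfolding eq .
  then have RlX: "R' * lX < lY" unfolding lX_def lY_def by (simp add: algebra_simps)
  have lXin: "lX \<in> Ssup pX" using sup_above[OF pX] eps unfolding lX_def HX_def by simp
  have lYout: "lY \<notin> Ssup pY" using sup_below[OF pY] eps unfolding lY_def HY_def by simp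
  define m where "m n = nat \<lfloor>real n * R'\<rfloor>" for n
  have mlim: "filterlim m at_top sequentially" unfolding m_def by (rule mR_lim[OF R'(1)])
  have lim1: "(\<lambda>n. prob_len pX (m n) (\<lambda>x. lX \<le> info_rate pX (m n) x)) \<longlonglongrightarrow> 0"
    using filterlim_compose[OF lXin[unfolded Ssup_def, simplified] mlim] by simp
  have lim2: "(\<lambda>n. stop_exceeds pX (\<Phi> n) (real n * R')) \<longlonglongrightarrow> 0"
    using R'(3) unfolding achievable_by_def .
  have ev: "eventually (\<lambda>n. prob_len pY n (\<lambda>y. lY \<le> info_rate pY n y)
       \<le> prob_len pX (m n) (\<lambda>x. lX \<le> info_rate pX (m n) x) + stop_exceeds pX (\<Phi> n) (real n * R')) sequentially"
  proof -
    have "eventually (\<lambda>n. 1 \<le> m n) sequentially" using mlim unfolding filterlim_at_top by blast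
    moreover have "eventually (\<lambda>n. 1 \<le> n) sequentially" by (rule eventually_ge_at_top)
    ultimately show ?thesis
    proof eventually_elim
      case (elim n)
      have t0: "0 \<le> real n * R'" using R'(1) by simp
      have "real (m n) \<le> real n * R'" unfolding m_def by (rule nat_floor_bounds(1)[OF t0])
      then have "real (m n) * lX \<le> real n * R' * lX" using lXpos by (intro mult_right_mono) auto
      also have "\<dots> \<le> real n * lY" using RlX by (simp add: mult.assoc mult_left_mono less_imp_le)
      finally have ml: "real (m n) * lX \<le> real n * lY" .
      have "prob_len pY n (\<lambda>y. lY \<le> info_rate pY n y)
          \<le> prob_len pX (m n) (\<lambda>x. lX \<le> info_rate pX (m n) x) + (1 - (\<Sum>s\<in>Lset (\<Phi> n) (m n) (\<lambda>z. True). pX s))"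
        by (rule core_sup[OF gen pX pY _ _ ml]) (use elim in auto)
      also have "1 - (\<Sum>s\<in>Lset (\<Phi> n) (m n) (\<lambda>z. True). pX s) = stop_exceeds pX (\<Phi> n) (real n * R')"
        unfolding m_def by (rule stop_exceeds_Lset[OF pX t0, symmetric])
      finally show ?case .
    qed
  qed
  have "(\<lambda>n. prob_len pY n (\<lambda>y. lY \<le> info_rate pY n y)) \<longlonglongrightarrow> 0"
    by (rule tendsto_sandwich[OF _ ev tendsto_const]) (use prob_len_nonneg[OF pY] tendsto_add[OF lim1 lim2] in auto)
  then show False using lYout unfolding Ssup_def by simp
qed


lemma conv_inf:
  fixes pX :: "'a::finite list \<Rightarrow> real" and pY :: "'b::finite list \<Rightarrow> real"
  assumes pX: "process pX" and pY: "process pY" and gen: "\<And>n. generates pX pY n (\<Phi> n)"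
    and ach: "achievable_by pX \<Phi> R"
  shows "inf_entropy pY \<le> R * inf_entropy pX"
proof (rule ccontr)
  define HX where "HX = inf_entropy pX"
  define HY where "HY = inf_entropy pY"
  assume "\<not> inf_entropy pY \<le> R * inf_entropy pX"
  then have "R * HX < HY" unfolding HX_def HY_def by simp
  moreover have HX0: "0 \<le> HX" unfolding HX_def by (rule inf_entropy_nonneg[OF pX])
  ultimately obtain R' where R': "0 < R'" "R' * HX < HY" "achievable_by pX \<Phi> R'"
    using pos_reduce[OF pX ach] by blast
  define eps where "eps = (HY - R' * HX) / (2 * (2 * R' + 1))"
  have eps: "0 < eps" using R' unfolding eps_def by simp
  define lX where "lX = HX + eps"
  define l1 where "l1 = HX + 2 * eps"
  define lY where "lY = HY - eps"
  have lXpos: "0 < lX" using HX0 eps unfolding lX_def by simp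
  have l1pos: "0 < l1" using HX0 eps unfolding l1_def by simp
  have eq: "(2 * R' + 1) * eps = (HY - R' * HX) / 2"
    using R'(1) unfolding eps_def by (simp add: field_simps)
  have "(HY - R' * HX) / 2 < HY - R' * HX" using R'(2) by (simp add: field_simps)
  then have "(2 * R' + 1) * eps < HY - R' * HX" unfolding eq .
  then have Rl1: "R' * l1 < lY" unfolding l1_def lY_def by (simp add: algebra_simps)
  have lYin: "lY \<in> Sinf pY" using inf_below[OF pY] eps unfolding lY_def HY_def by simp
  have lXout: "lX \<notin> Sinf pX" using inf_above[OF pX] eps unfolding lX_def HX_def by simp
  define m where "m n = nat \<lfloor>real n * R'\<rfloor>" for n
  have mlim: "filterlim m at_top sequentially" unfolding m_def by (rule mR_lim[OF R'(1)])
  define g where "g n = prob_len pX (m n) (\<lambda>x. info_rate pX (m n) x \<le> l1)" for n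
  have lim1: "(\<lambda>n. prob_len pY n (\<lambda>y. info_rate pY n y \<le> lY)) \<longlonglongrightarrow> 0"
    using lYin unfolding Sinf_def by simp
  have lim2: "(\<lambda>n. stop_exceeds pX (\<Phi> n) (real n * R')) \<longlonglongrightarrow> 0"
    using R'(3) unfolding achievable_by_def .
  have ev: "eventually (\<lambda>n. g n \<le> stop_exceeds pX (\<Phi> n) (real n * R') + prob_len pY n (\<lambda>y. info_rate pY n y \<le> lY)) sequentially"
  proof -
    have "eventually (\<lambda>n. 1 \<le> m n) sequentially" using mlim unfolding filterlim_at_top by blast
    moreover have "eventually (\<lambda>n. 1 \<le> n) sequentially" by (rule eventually_ge_at_top)
    ultimately show ?thesis
    proof eventually_elim
      case (elim n)
      have t0: "0 \<le> real n * R'" using R'(1) by simp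
      have "real (m n) \<le> real n * R'" unfolding m_def by (rule nat_floor_bounds(1)[OF t0])
      then have "real (m n) * l1 \<le> real n * R' * l1" using l1pos by (intro mult_right_mono) auto
      also have "\<dots> \<le> real n * lY" using Rl1 by (simp add: mult.assoc mult_left_mono less_imp_le)
      finally have ml: "real (m n) * l1 \<le> real n * lY" .
      have "g n \<le> (1 - (\<Sum>s\<in>Lset (\<Phi> n) (m n) (\<lambda>z. True). pX s)) + prob_len pY n (\<lambda>y. info_rate pY n y \<le> lY)"
        unfolding g_def by (rule core_inf[OF gen pX pY _ _ ml]) (use elim in auto)
      also have "1 - (\<Sum>s\<in>Lset (\<Phi> n) (m n) (\<lambda>z. True). pX s) = stop_exceeds pX (\<Phi> n) (real n * R')"
        unfolding m_def by (rule stop_exceeds_Lset[OF pX t0, symmetric])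
      finally show ?case .
    qed
  qed
  have glim: "g \<longlonglongrightarrow> 0"
    by (rule tendsto_sandwich[OF _ ev tendsto_const]) (use prob_len_nonneg[OF pX] tendsto_add[OF lim2 lim1] in \<open>auto simp: g_def\<close>)
  define kn where "kn k = nat \<lfloor>real k * (1 / R')\<rfloor>" for k
  have knlim: "filterlim kn at_top sequentially" unfolding kn_def by (rule mR_lim) (use R'(1) in simp)
  have glim2: "(\<lambda>k. g (kn k)) \<longlonglongrightarrow> 0" using filterlim_compose[OF glim knlim] by simp
  obtain N :: nat where N: "(R' + 1) * l1 / eps < real N" using reals_Archimedean2 by blast
  have ev2: "eventually (\<lambda>k. prob_len pX k (\<lambda>x. info_rate pX k x \<le> lX) \<le> g (kn k)) sequentially"
    unfolding eventually_sequentially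
  proof (intro exI allI impI)
    fix k assume kN: "max N 1 \<le> k"
    have k1: "1 \<le> real k" using kN by simp
    have "(R' + 1) * l1 / eps < real k" using N kN by linarith
    then have kbig: "(R' + 1) * l1 < real k * eps" using eps by (simp add: divide_less_eq)
    define n where "n = kn k"
    define mm where "mm = m n"
    have a0: "0 \<le> real k * (1 / R')" using R'(1) by simp
    have nb1: "real n \<le> real k / R'" using nat_floor_bounds(1)[OF a0] unfolding n_def kn_def by simp
    have nb2: "real k / R' - 1 < real n" using nat_floor_bounds(2)[OF a0] unfolding n_def kn_def by simp
    have t0: "0 \<le> real n * R'" using R'(1) by simp
    have mb1: "real mm \<le> real n * R'" using nat_floor_bounds(1)[OF t0] unfolding mm_def m_def .
    have mb2: "real n * R' - 1 < real mm" using nat_floor_bounds(2)[OF t0] unfolding mm_def m_def .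
    have "real n * R' \<le> real k" using nb1 R'(1) by (simp add: field_simps)
    then have mmk: "mm \<le> k" using mb1 by linarith
    have "(real k / R' - 1) * R' \<le> real n * R'" using nb2 R'(1) by (intro mult_right_mono) auto
    moreover have "(real k / R' - 1) * R' = real k - R'" using R'(1) by (simp add: field_simps)
    ultimately have "real k - R' - 1 < real mm" using mb2 by linarith
    then have "(real k - R' - 1) * l1 \<le> real mm * l1" using l1pos by (intro mult_right_mono) auto
    moreover have "real k * lX = real k * l1 - real k * eps" unfolding lX_def l1_def by (simp add: algebra_simps)
    ultimately have klm: "real k * lX \<le> real mm * l1" using kbig by (simp add: algebra_simps)
    have "0 < real k * lX" using k1 lXpos by simp
    then have mm0: "0 < mm" using klm l1pos by (cases "mm = 0") auto
    have "prob_len pX k (\<lambda>x. info_rate pX k x \<le> lX) \<le> prob_len pX k (\<lambda>x. info_rate pX mm (take mm x) \<le> l1)"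
    proof (rule prob_len_mono'[OF pX])
      fix x assume len: "length x = k" and inf: "info_rate pX k x \<le> lX" and pos: "0 < pX x"
      have k0: "0 < k" using k1 by simp
      have a1: "pX x \<le> pX (take mm x)" by (rule prefix_le'[OF pX take_is_prefix])
      have tpos: "0 < pX (take mm x)" using a1 pos by linarith
      have a2: "2 powr (-(real k * lX)) \<le> pX x" using inf info_le_iff[where p=pX and xs=x, OF pos k0] by simp
      have a3: "2 powr (-(real mm * l1)) \<le> 2 powr (-(real k * lX))" using klm by (intro powr_mono) auto
      have "2 powr (-(real mm * l1)) \<le> pX (take mm x)" using a1 a2 a3 by linarith
      then show "info_rate pX mm (take mm x) \<le> l1"
        using info_le_iff[where p=pX and xs="take mm x", OF tpos mm0] by simp
    qed
    also have "\<dots> = prob_len pX mm (\<lambda>x. info_rate pX mm x \<le> l1)"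
      by (rule prob_len_take[OF pX mmk])
    also have "\<dots> = g (kn k)" unfolding g_def mm_def n_def ..
    finally show "prob_len pX k (\<lambda>x. info_rate pX k x \<le> lX) \<le> g (kn k)" .
  qed
  have "(\<lambda>k. prob_len pX k (\<lambda>x. info_rate pX k x \<le> lX)) \<longlonglongrightarrow> 0"
    by (rule tendsto_sandwich[OF _ ev2 tendsto_const glim2]) (use prob_len_nonneg[OF pX] in auto)
  then show False using lXout unfolding Sinf_def by simp
qed


section \<open>Intervals\<close>

definition lo :: "('a::{finite,linorder} list \<Rightarrow> real) \<Rightarrow> 'a list \<Rightarrow> real" where
  "lo p s = fst (intv_rev p (rev s))"
definition hi :: "('a::{finite,linorder} list \<Rightarrow> real) \<Rightarrow> 'a list \<Rightarrow> real" where
  "hi p s = snd (intv_rev p (rev s))"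

definition Cl :: "('a::{finite,linorder} list \<Rightarrow> real) \<Rightarrow> 'a list \<Rightarrow> 'a \<Rightarrow> real" where
  "Cl p s x = (\<Sum>k\<in>{k. k < x}. cond_prob p s k)"
definition Cle :: "('a::{finite,linorder} list \<Rightarrow> real) \<Rightarrow> 'a list \<Rightarrow> 'a \<Rightarrow> real" where
  "Cle p s x = (\<Sum>k\<in>{k. k \<le> x}. cond_prob p s k)"

lemma intv_eq: "intv p s = {lo p s ..< hi p s}"
  unfolding intv_def lo_def hi_def by (simp add: split_beta)

lemma lo_Nil[simp]: "lo p [] = 0" and hi_Nil[simp]: "hi p [] = 1"
  unfolding lo_def hi_def by simp_all

lemma lo_snoc: "lo p (s @ [x]) = lo p s + (hi p s - lo p s) * Cl p s x"
  and hi_snoc: "hi p (s @ [x]) = lo p s + (hi p s - lo p s) * Cle p s x"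
  unfolding lo_def hi_def Cl_def Cle_def by (simp_all add: Let_def split_beta)

lemma cond_prob_nonneg: "process p \<Longrightarrow> 0 \<le> cond_prob p s k"
  unfolding cond_prob_def by (simp add: process_nonneg)

lemma cond_prob_sum: assumes "process p"
  shows "(\<Sum>k\<in>UNIV. cond_prob p s k) = (if p s = 0 then 0 else 1)"
  unfolding cond_prob_def using process_sum[OF assms, of s] by (simp add: sum_divide_distrib[symmetric])

lemma Cl_nonneg: "process p \<Longrightarrow> 0 \<le> Cl p s x"
  unfolding Cl_def by (simp add: sum_nonneg cond_prob_nonneg)

lemma Cle_le1: assumes "process p" shows "Cle p s x \<le> 1"
proof -
  have "Cle p s x \<le> (\<Sum>k\<in>UNIV. cond_prob p s k)"
    unfolding Cle_def by (rule sum_mono2) (auto simp: cond_prob_nonneg[OF assms])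
  then show ?thesis using cond_prob_sum[OF assms, of s] by (auto split: if_splits)
qed

lemma Cle_Cl: "Cle p s x = Cl p s x + cond_prob p s x"
proof -
  have "{k. k \<le> x} = insert x {k. k < x}" by auto
  then show ?thesis unfolding Cle_def Cl_def by simp
qed

lemma hi_lo_len: assumes "process p" shows "hi p s - lo p s = p s"
proof (induction s rule: rev_induct)
  case Nil then show ?case using process_Nil[OF assms] by simp
next
  case (snoc x s)
  have "hi p (s @ [x]) - lo p (s @ [x]) = p s * cond_prob p s x"
    unfolding hi_snoc lo_snoc Cle_Cl using snoc by (simp add: algebra_simps)
  also have "\<dots> = p (s @ [x])"
  proof (cases "p s = 0")
    case True
    then have "p (s @ [x]) = 0" using prefix_le[OF assms, of s "[x]"] process_nonneg[OF assms, of "s@[x]"] by simp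
    then show ?thesis using True by simp
  qed (simp add: cond_prob_def)
  finally show ?case .
qed

lemma lo_le_hi: "process p \<Longrightarrow> lo p s \<le> hi p s"
  using hi_lo_len[of p s] process_nonneg[of p s] by simp

lemma snoc_nest: assumes "process p"
  shows "lo p s \<le> lo p (s @ [x]) \<and> hi p (s @ [x]) \<le> hi p s"
proof -
  have w: "0 \<le> hi p s - lo p s" using lo_le_hi[OF assms] by simp
  have "0 \<le> (hi p s - lo p s) * Cl p s x" using w Cl_nonneg[OF assms] by simp
  moreover have "(hi p s - lo p s) * Cle p s x \<le> (hi p s - lo p s)"
    using w Cle_le1[OF assms] by (simp add: mult_left_le)
  ultimately show ?thesis unfolding lo_snoc hi_snoc by simp
qed

lemma append_nest: assumes "process p"
  shows "lo p s \<le> lo p (s @ t) \<and> hi p (s @ t) \<le> hi p s"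
proof (induction t rule: rev_induct)
  case Nil then show ?case by simp
next
  case (snoc x t)
  then show ?case using snoc_nest[OF assms, of "s @ t" x] by simp
qed

lemma intv_prefix: assumes "process p" "prefix s x" shows "intv p x \<subseteq> intv p s"
proof -
  obtain zs where x: "x = s @ zs" using assms(2) unfolding prefix_def by blast
  show ?thesis using append_nest[OF assms(1), of s zs] unfolding intv_eq x by auto
qed

lemma intv_sub01: "process p \<Longrightarrow> intv p x \<subseteq> {0..<1}"
  using intv_prefix[of p "[]" x] by (simp add: intv_eq)

lemma intv_disj: assumes "process p" "length x = length x'" "x \<noteq> x'"
  shows "intv p x \<inter> intv p x' = {}"
proof -
  have "\<not> prefix x x'" using assms(2,3) by (auto simp: prefix_def)
  moreover have "\<not> prefix x' x" using assms(2,3) by (auto simp: prefix_def)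
  ultimately have par: "x \<parallel> x'" by blast
  obtain as b bs c cs where dec: "b \<noteq> c" "x = as @ b # bs" "x' = as @ c # cs"
    using parallel_decomp[OF par] by blast
  have key: "hi p (as @ [u]) \<le> lo p (as @ [v])" if "u < v" for u v
  proof -
    have "Cle p as u \<le> Cl p as v"
      unfolding Cle_def Cl_def by (rule sum_mono2) (use that in \<open>auto simp: cond_prob_nonneg[OF assms(1)]\<close>)
    then show ?thesis unfolding lo_snoc hi_snoc using lo_le_hi[OF assms(1), of as] by (simp add: mult_left_mono)
  qed
  have s1: "intv p x \<subseteq> intv p (as @ [b])" using intv_prefix[OF assms(1)] dec(2) by (simp add: prefix_def)
  have s2: "intv p x' \<subseteq> intv p (as @ [c])" using intv_prefix[OF assms(1)] dec(3) by (simp add: prefix_def)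
  show ?thesis
  proof (cases "b < c")
    case True
    then have "intv p (as @ [b]) \<inter> intv p (as @ [c]) = {}" using key[OF True] unfolding intv_eq by auto
    then show ?thesis using s1 s2 by blast
  next
    case False
    then have "c < b" using dec(1) by simp
    then have "intv p (as @ [b]) \<inter> intv p (as @ [c]) = {}" using key[of c b] unfolding intv_eq by auto
    then show ?thesis using s1 s2 by blast
  qed
qed

lemma child_cover: assumes "process p" "t \<in> intv p s" shows "\<exists>k. t \<in> intv p (s @ [k])"
proof -
  have t: "lo p s \<le> t" "t < hi p s" using assms(2) unfolding intv_eq by auto
  define w where "w = hi p s - lo p s"
  have ps: "p s \<noteq> 0" using t hi_lo_len[OF assms(1), of s] by auto
  define K where "K = {k. t < lo p s + w * Cle p s k}"
  have "Cle p s (Max UNIV) = 1"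
  proof -
    have "{k. k \<le> Max (UNIV::'a set)} = UNIV" by auto
    then show ?thesis unfolding Cle_def using cond_prob_sum[OF assms(1), of s] ps by simp
  qed
  then have "Max UNIV \<in> K" unfolding K_def w_def using t by simp
  then have Kne: "K \<noteq> {}" by auto
  define k where "k = Min K"
  have kK: "k \<in> K" unfolding k_def using Kne by simp
  have kmin: "\<And>j. j \<in> K \<Longrightarrow> k \<le> j" unfolding k_def by simp
  have up: "t < hi p (s @ [k])" using kK unfolding K_def hi_snoc w_def by simp
  have low: "lo p (s @ [k]) \<le> t"
  proof (cases "{j. j < k} = {}")
    case True
    then have "Cl p s k = 0" unfolding Cl_def by simp
    then show ?thesis using t unfolding lo_snoc by simp
  next
    case False
    define j where "j = Max {j. j < k}"
    have jk: "j < k" unfolding j_def using False by (metis Max_in finite mem_Collect_eq)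
    have "j \<notin> K" using kmin jk by fastforce
    then have tj: "lo p s + w * Cle p s j \<le> t" unfolding K_def by simp
    have "{i. i \<le> j} = {i. i < k}"
    proof
      show "{i. i \<le> j} \<subseteq> {i. i < k}" using jk by auto
      show "{i. i < k} \<subseteq> {i. i \<le> j}" unfolding j_def by (auto intro: Max_ge)
    qed
    then have "Cle p s j = Cl p s k" unfolding Cle_def Cl_def by simp
    then show ?thesis using tj unfolding lo_snoc w_def by simp
  qed
  show ?thesis using up low unfolding intv_eq by auto
qed

lemma cover: assumes "process p" "t \<in> {0..<1}" shows "\<exists>x\<in>W m. t \<in> intv p x"
proof (induction m)
  case 0 then show ?case using assms(2) by (auto simp: intv_eq)
next
  case (Suc m)
  then obtain s where s: "length s = m" "t \<in> intv p s" by auto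
  obtain k where "t \<in> intv p (s @ [k])" using child_cover[OF assms(1) s(2)] by blast
  then show ?case using s(1) by (intro bexI[of _ "s @ [k]"]) auto
qed

lemma card_point: assumes "process p" shows "card {x\<in>W m. t \<in> intv p x} \<le> 1"
proof -
  have "\<And>x y. x \<in> {x\<in>W m. t \<in> intv p x} \<Longrightarrow> y \<in> {x\<in>W m. t \<in> intv p x} \<Longrightarrow> x = y"
    using intv_disj[OF assms] by blast
  then show ?thesis using card_le_Suc0_iff_eq[OF finite_subset[OF _ finite_W[of m]]] by (metis (no_types, lifting) One_nat_def mem_Collect_eq subsetI)
qed


abbreviation mu :: "real set \<Rightarrow> real" where "mu A \<equiv> measure lborel A"

lemma Ico_fm: "{a..<b::real} \<in> fmeasurable lborel"
proof (cases "a \<le> b")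
  case True then show ?thesis by (intro fmeasurableI) auto
next
  case False then show ?thesis by (intro fmeasurableI) auto
qed

lemma fm01: assumes "A \<subseteq> {0..<1::real}" "A \<in> sets lborel" shows "A \<in> fmeasurable lborel"
proof (rule fmeasurableI)
  show "A \<in> sets lborel" by fact
  have "emeasure lborel A \<le> emeasure lborel {0..<1::real}" using assms by (intro emeasure_mono) auto
  also have "\<dots> < \<infinity>" by simp
  finally show "emeasure lborel A < \<infinity>" .
qed

lemma intv_sets: "intv p x \<in> sets lborel"
  unfolding intv_eq by simp

lemma mu_intv: "process p \<Longrightarrow> mu (intv p x) = p x"
  unfolding intv_eq using lo_le_hi[of p x] hi_lo_len[of p x] by simp

lemma sum_card1:
  fixes f :: "'a \<Rightarrow> real"
  assumes "finite A" "card A \<le> 1" "\<And>x. x \<in> A \<Longrightarrow> f x \<le> c" "0 \<le> c"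
  shows "sum f A \<le> c"
proof (cases "card A = 0")
  case True then show ?thesis using assms(1,4) by simp
next
  case False
  then have "card A = 1" using assms(2) by simp
  then obtain a where "A = {a}" by (rule card_1_singletonE)
  then show ?thesis using assms(3) by simp
qed

lemma straddle:
  fixes a b c d :: real
  assumes "{a..<b} \<inter> {c..<d} \<noteq> {}" "\<not> {a..<b} \<subseteq> {c..<d}"
  shows "c \<in> {a..<b} \<or> d \<in> {a..<b}"
proof -
  obtain t where "t \<in> {a..<b} \<inter> {c..<d}" using assms(1) by blast
  then have t: "a \<le> t" "t < b" "c \<le> t" "t < d" by auto
  obtain u where "u \<in> {a..<b}" "u \<notin> {c..<d}" using assms(2) by blast
  then have u: "a \<le> u" "u < b" "\<not> (c \<le> u \<and> u < d)" by auto
  show ?thesis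
  proof (cases "u < c")
    case True then show ?thesis using t u by auto
  next
    case False then show ?thesis using t u by auto
  qed
qed

section \<open>The interval algorithm\<close>

lemma ia_None: "interval_alg pX pY n s = None \<longleftrightarrow> (\<forall>y. length y = n \<longrightarrow> \<not> intv pX s \<subseteq> intv pY y)"
  unfolding interval_alg_def by auto

lemma ia_Some: assumes "interval_alg pX pY n s = Some y" shows "length y = n \<and> intv pX s \<subseteq> intv pY y"
proof -
  have ex: "\<exists>y. length y = n \<and> intv pX s \<subseteq> intv pY y" using assms unfolding interval_alg_def by (auto split: if_splits)
  then have "y = (SOME y. length y = n \<and> intv pX s \<subseteq> intv pY y)" using assms unfolding interval_alg_def by simp
  then show ?thesis using someI_ex[OF ex] by simp
qed

lemma ia_mono: assumes "process pX" "interval_alg pX pY n s \<noteq> None" "prefix s x"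
  shows "interval_alg pX pY n x \<noteq> None"
  using assms intv_prefix[OF assms(1) assms(3)] unfolding ia_None by blast

lemma ia_stopped: assumes "process pX"
  shows "(\<exists>s. is_leaf (interval_alg pX pY n) s \<and> prefix s x) \<longleftrightarrow> interval_alg pX pY n x \<noteq> None"
proof
  assume "\<exists>s. is_leaf (interval_alg pX pY n) s \<and> prefix s x"
  then obtain s where "is_leaf (interval_alg pX pY n) s" "prefix s x" by blast
  then show "interval_alg pX pY n x \<noteq> None" using ia_mono[OF assms] unfolding is_leaf_def by blast
next
  define \<phi> where "\<phi> = interval_alg pX pY n"
  assume x: "interval_alg pX pY n x \<noteq> None"
  define k where "k = (LEAST k. \<phi> (take k x) \<noteq> None)"
  have ex: "\<phi> (take (length x) x) \<noteq> None" using x unfolding \<phi>_def by simp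
  have k: "\<phi> (take k x) \<noteq> None" unfolding k_def by (rule LeastI[where P="\<lambda>k. \<phi> (take k x) \<noteq> None", OF ex])
  have kmin: "\<And>j. j < k \<Longrightarrow> \<phi> (take j x) = None" unfolding k_def using not_less_Least by blast
  have "is_leaf \<phi> (take k x)"
    unfolding is_leaf_def
  proof (intro conjI allI impI k)
    fix s' assume sp: "strict_prefix s' (take k x)"
    then have "prefix s' x" by (meson prefix_order.dual_order.trans prefix_order.less_imp_le take_is_prefix)
    then have s'eq: "s' = take (length s') x" by (metis append_eq_conv_conj prefix_def)
    have "length s' < length (take k x)" using sp by (rule prefix_length_less)
    then have "length s' < k" by simp
    then show "\<phi> s' = None" using kmin s'eq by metis
  qed
  then show "\<exists>s. is_leaf (interval_alg pX pY n) s \<and> prefix s x" unfolding \<phi>_def using take_is_prefix by blast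
qed


lemma mu_split:
  assumes "A \<subseteq> {0..<1}" "A \<in> sets lborel" "B \<in> sets lborel"
  shows "mu A = mu (A \<inter> B) + mu (A - B)"
proof -
  have fA: "A \<in> fmeasurable lborel" by (rule fm01[OF assms(1,2)])
  have f1: "A \<inter> B \<in> fmeasurable lborel" by (rule fm01) (use assms in auto)
  have f2: "A - B \<in> fmeasurable lborel" by (rule fm01) (use assms in auto)
  have "A = (A \<inter> B) \<union> (A - B)" by auto
  then have "mu A = mu ((A \<inter> B) \<union> (A - B))" by simp
  also have "\<dots> = mu (A \<inter> B) + mu (A - B)"
    using f1 f2 by (intro measure_Union) (auto simp: fmeasurable_def)
  finally show ?thesis .
qed

lemma mu_UN_disj:
  assumes "finite I" "\<And>i. i \<in> I \<Longrightarrow> A i \<subseteq> {0..<1}" "\<And>i. i \<in> I \<Longrightarrow> A i \<in> sets lborel"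
    "\<And>i j. i \<in> I \<Longrightarrow> j \<in> I \<Longrightarrow> i \<noteq> j \<Longrightarrow> A i \<inter> A j = {}"
  shows "mu (\<Union>i\<in>I. A i) = (\<Sum>i\<in>I. mu (A i))"
  by (rule measure_UNION'[OF assms(1)]) (use assms fm01 in \<open>auto simp: pairwise_def disjnt_def\<close>)

lemma UN_sets: "finite I \<Longrightarrow> (\<And>i. i \<in> I \<Longrightarrow> A i \<in> sets lborel) \<Longrightarrow> (\<Union>i\<in>I. A i) \<in> sets lborel"
  by (rule sets.finite_UN) auto

lemma ach_core:
  fixes pX :: "'a::{finite,linorder} list \<Rightarrow> real" and pY :: "'b::{finite,linorder} list \<Rightarrow> real"
  assumes pX: "process pX" and pY: "process pY" and m: "0 < m" and n: "0 < n"
  shows "(\<Sum>x\<in>{x\<in>W m. interval_alg pX pY n x = None}. pX x)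
    \<le> prob_len pX m (\<lambda>x. info_rate pX m x \<le> lX) + prob_len pY n (\<lambda>y. lY \<le> info_rate pY n y)
       + 2 * 2 powr (real n * lY - real m * lX)"
proof -
  define \<phi> where "\<phi> = interval_alg pX pY n"
  define \<gamma> where "\<gamma> = 2 powr (-(real m * lX))"
  define \<beta> where "\<beta> = 2 powr (-(real n * lY))"
  define S where "S = {x\<in>W m. \<phi> x = None \<and> pX x \<le> \<gamma>}"
  define Big where "Big = {y\<in>W n. \<beta> \<le> pY y}"
  define G where "G = (\<Union>y\<in>Big. intv pY y)"
  have fS: "finite S" unfolding S_def by (rule finite_subset[OF _ finite_W[of m]]) auto
  have fB: "finite Big" unfolding Big_def by (rule finite_subset[OF _ finite_W[of n]]) auto
  have G01: "G \<subseteq> {0..<1}" unfolding G_def using intv_sub01[OF pY] by blast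
  have Gs: "G \<in> sets lborel" unfolding G_def by (rule UN_sets[OF fB intv_sets])
  have gpos: "0 \<le> \<gamma>" unfolding \<gamma>_def by simp
  have bpos: "0 < \<beta>" unfolding \<beta>_def by simp
  have s1: "(\<Sum>x\<in>{x\<in>W m. \<phi> x = None}. pX x) \<le> (\<Sum>x\<in>{x\<in>W m. info_rate pX m x \<le> lX \<or> (\<phi> x = None \<and> pX x \<le> \<gamma>)}. pX x)"
  proof (rule sum_le_filter[OF finite_W])
    show "\<And>x. 0 \<le> pX x" by (rule process_nonneg[OF pX])
  next
    fix x assume x: "x \<in> W m" and none: "\<phi> x = None" and pos: "0 < pX x"
    show "info_rate pX m x \<le> lX \<or> (\<phi> x = None \<and> pX x \<le> \<gamma>)"
    proof (cases "pX x \<le> \<gamma>")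
      case False
      then have "\<gamma> \<le> pX x" by simp
      then have "info_rate pX m x \<le> lX" using info_le_iff[where p=pX and xs=x, OF pos m] unfolding \<gamma>_def by simp
      then show ?thesis by simp
    qed (use none in simp)
  qed
  have s2: "(\<Sum>x\<in>{x\<in>W m. info_rate pX m x \<le> lX \<or> (\<phi> x = None \<and> pX x \<le> \<gamma>)}. pX x)
     \<le> prob_len pX m (\<lambda>x. info_rate pX m x \<le> lX) + (\<Sum>x\<in>S. pX x)"
    using sum_filter_disj[OF finite_W[of m] process_nonneg[OF pX], where A="\<lambda>x. info_rate pX m x \<le> lX" and C="\<lambda>x. \<phi> x = None \<and> pX x \<le> \<gamma>"]
    unfolding S_def by (simp add: prob_len_def)
  have s3: "(\<Sum>x\<in>S. pX x) = (\<Sum>x\<in>S. mu (intv pX x \<inter> G)) + (\<Sum>x\<in>S. mu (intv pX x - G))"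
  proof -
    have "\<And>x. pX x = mu (intv pX x \<inter> G) + mu (intv pX x - G)"
      using mu_split[OF intv_sub01[OF pX] intv_sets Gs] mu_intv[OF pX] by metis
    then show ?thesis by (simp add: sum.distrib)
  qed
  have muG: "mu G = (\<Sum>y\<in>Big. pY y)"
    unfolding G_def
    by (subst mu_UN_disj[OF fB intv_sub01[OF pY] intv_sets])
       (auto simp: Big_def mu_intv[OF pY] intro!: intv_disj[OF pY])
  have s4: "(\<Sum>x\<in>S. mu (intv pX x - G)) \<le> 1 - (\<Sum>y\<in>Big. pY y)"
  proof -
    have "(\<Sum>x\<in>S. mu (intv pX x - G)) = mu (\<Union>x\<in>S. intv pX x - G)"
    proof (rule mu_UN_disj[OF fS, symmetric])
      show "intv pX i - G \<subseteq> {0..<1}" for i using intv_sub01[OF pX, of i] by blast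
      show "intv pX i - G \<in> sets lborel" for i using intv_sets[of pX i] Gs by (rule sets.Diff)
      show "(intv pX i - G) \<inter> (intv pX j - G) = {}" if "i \<in> S" "j \<in> S" "i \<noteq> j" for i j
      proof -
        have "intv pX i \<inter> intv pX j = {}" using that intv_disj[OF pX, of i j] by (auto simp: S_def)
        then show ?thesis by blast
      qed
    qed
    also have "\<dots> \<le> mu ({0..<1} - G)"
    proof (rule measure_mono_fmeasurable)
      show "(\<Union>x\<in>S. intv pX x - G) \<subseteq> {0..<1} - G" using intv_sub01[OF pX] by blast
      have "(\<Union>x\<in>S. intv pX x - G) = (\<Union>x\<in>S. intv pX x) - G" by blast
      then show "(\<Union>x\<in>S. intv pX x - G) \<in> sets lborel"
        using sets.Diff[OF UN_sets[OF fS intv_sets] Gs] by simp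
      show "{0..<1} - G \<in> fmeasurable lborel" by (rule fm01) (use Gs in auto)
    qed
    also have "\<dots> = 1 - mu G"
      using measure_Diff[of lborel "{0..<1::real}" G] G01 Gs by simp
    finally show ?thesis unfolding muG .
  qed
  have s5: "1 - (\<Sum>y\<in>Big. pY y) \<le> prob_len pY n (\<lambda>y. lY \<le> info_rate pY n y)"
  proof -
    have "1 - (\<Sum>y\<in>Big. pY y) = prob_len pY n (\<lambda>y. \<not> \<beta> \<le> pY y)"
      using prob_len_compl[OF pY, of n "\<lambda>y. \<beta> \<le> pY y"] unfolding prob_len_def Big_def by simp
    also have "\<dots> \<le> prob_len pY n (\<lambda>y. lY \<le> info_rate pY n y)"
    proof (rule prob_len_mono'[OF pY])
      fix y assume "\<not> \<beta> \<le> pY y" "0 < pY y"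
      then show "lY \<le> info_rate pY n y" using info_ge_iff[where p=pY and xs=y, OF _ n] unfolding \<beta>_def by simp
    qed
    finally show ?thesis .
  qed
  have s6: "(\<Sum>x\<in>S. mu (intv pX x \<inter> G)) \<le> (\<Sum>y\<in>Big. 2 * \<gamma>)"
  proof -
    have "\<And>x. mu (intv pX x \<inter> G) = (\<Sum>y\<in>Big. mu (intv pX x \<inter> intv pY y))"
    proof -
      fix x
      have "intv pX x \<inter> G = (\<Union>y\<in>Big. intv pX x \<inter> intv pY y)" unfolding G_def by blast
      moreover have "mu (\<Union>y\<in>Big. intv pX x \<inter> intv pY y) = (\<Sum>y\<in>Big. mu (intv pX x \<inter> intv pY y))"
      proof (rule mu_UN_disj[OF fB])
        show "intv pX x \<inter> intv pY i \<subseteq> {0..<1}" for i using intv_sub01[OF pY, of i] by blast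
        show "intv pX x \<inter> intv pY i \<in> sets lborel" for i using intv_sets[of pX x] intv_sets[of pY i] by (rule sets.Int)
        show "(intv pX x \<inter> intv pY i) \<inter> (intv pX x \<inter> intv pY j) = {}" if "i \<in> Big" "j \<in> Big" "i \<noteq> j" for i j
        proof -
          have "intv pY i \<inter> intv pY j = {}" using that intv_disj[OF pY, of i j] by (auto simp: Big_def)
          then show ?thesis by blast
        qed
      qed
      ultimately show "mu (intv pX x \<inter> G) = (\<Sum>y\<in>Big. mu (intv pX x \<inter> intv pY y))" by simp
    qed
    then have "(\<Sum>x\<in>S. mu (intv pX x \<inter> G)) = (\<Sum>y\<in>Big. \<Sum>x\<in>S. mu (intv pX x \<inter> intv pY y))"
      by (simp add: sum.swap[of _ S])
    also have "\<dots> \<le> (\<Sum>y\<in>Big. 2 * \<gamma>)"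
    proof (rule sum_mono)
      fix y assume yB: "y \<in> Big"
      define c where "c = lo pY y"
      define d where "d = hi pY y"
      have J: "intv pY y = {c..<d}" unfolding c_def d_def intv_eq ..
      have tm: "mu (intv pX x \<inter> intv pY y) \<le> (if c \<in> intv pX x then pX x else 0) + (if d \<in> intv pX x then pX x else 0)"
        if xS: "x \<in> S" for x
      proof (cases "intv pX x \<inter> intv pY y = {}")
        case True then show ?thesis using process_nonneg[OF pX, of x] by simp
      next
        case False
        have "\<phi> x = None" using xS unfolding S_def by simp
        then have nsub: "\<not> intv pX x \<subseteq> intv pY y" using yB unfolding \<phi>_def ia_None Big_def by simp
        have "{lo pX x..<hi pX x} \<inter> {lo pY y..<hi pY y} \<noteq> {}" "\<not> {lo pX x..<hi pX x} \<subseteq> {lo pY y..<hi pY y}"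
          using False nsub unfolding intv_eq by auto
        from straddle[OF this] have "c \<in> intv pX x \<or> d \<in> intv pX x"
          unfolding c_def d_def intv_eq .
        moreover have "mu (intv pX x \<inter> intv pY y) \<le> pX x"
          using measure_mono_fmeasurable[of "intv pX x \<inter> intv pY y" "intv pX x" lborel,
              OF _ sets.Int[OF intv_sets[of pX x] intv_sets[of pY y]] fm01[OF intv_sub01[OF pX] intv_sets]]
            mu_intv[OF pX, of x] by auto
        ultimately show ?thesis using process_nonneg[OF pX, of x] by auto
      qed
      have pt: "(\<Sum>x\<in>S. if t \<in> intv pX x then pX x else 0) \<le> \<gamma>" for t
      proof -
        have "(\<Sum>x\<in>S. if t \<in> intv pX x then pX x else 0) = (\<Sum>x\<in>{x\<in>S. t \<in> intv pX x}. pX x)"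
          by (rule sum.inter_filter[OF fS, symmetric])
        also have "\<dots> \<le> \<gamma>"
        proof (rule sum_card1)
          show "finite {x\<in>S. t \<in> intv pX x}" using fS by simp
          have "card {x\<in>S. t \<in> intv pX x} \<le> card {x\<in>W m. t \<in> intv pX x}"
            by (rule card_mono[OF finite_subset[OF _ finite_W[of m]]]) (auto simp: S_def)
          then show "card {x\<in>S. t \<in> intv pX x} \<le> 1" using card_point[OF pX, of m t] by linarith
          show "\<And>x. x \<in> {x\<in>S. t \<in> intv pX x} \<Longrightarrow> pX x \<le> \<gamma>" by (auto simp: S_def)
        qed (rule gpos)
        finally show ?thesis .
      qed
      have "(\<Sum>x\<in>S. mu (intv pX x \<inter> intv pY y)) \<le> (\<Sum>x\<in>S. (if c \<in> intv pX x then pX x else 0) + (if d \<in> intv pX x then pX x else 0))"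
        by (rule sum_mono) (rule tm)
      also have "\<dots> \<le> 2 * \<gamma>" using pt[of c] pt[of d] by (simp add: sum.distrib)
      finally show "(\<Sum>x\<in>S. mu (intv pX x \<inter> intv pY y)) \<le> 2 * \<gamma>" .
    qed
    finally show ?thesis .
  qed
  have s7: "(\<Sum>y\<in>Big. 2 * \<gamma>) \<le> 2 * 2 powr (real n * lY - real m * lX)"
  proof -
    have "real (card Big) * \<beta> \<le> (\<Sum>y\<in>Big. pY y)"
      using sum_mono[of Big "\<lambda>_. \<beta>" pY] by (simp add: Big_def)
    also have "\<dots> \<le> (\<Sum>y\<in>W n. pY y)"
      by (rule sum_mono2[OF finite_W]) (auto simp: Big_def process_nonneg[OF pY])
    also have "\<dots> = 1" by (rule sum_W[OF pY])
    finally have cb: "real (card Big) * \<beta> \<le> 1" .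
    have a: "(\<Sum>y\<in>Big. 2 * \<gamma>) = 2 * \<gamma> * real (card Big)" by simp
    have b: "2 * \<gamma> * real (card Big) \<le> 2 * \<gamma> * (1 / \<beta>)"
      using cb bpos gpos by (intro mult_left_mono) (auto simp: field_simps)
    have c: "\<gamma> * (1 / \<beta>) = 2 powr (real n * lY - real m * lX)"
    proof -
      have "\<gamma> * (1 / \<beta>) = 2 powr (-(real m * lX) - (-(real n * lY)))" unfolding \<gamma>_def \<beta>_def powr_diff by simp
      also have "-(real m * lX) - (-(real n * lY)) = real n * lY - real m * lX" by simp
      finally show ?thesis .
    qed
    have d: "2 * \<gamma> * (1 / \<beta>) = 2 * (\<gamma> * (1 / \<beta>))" by simp
    show ?thesis using a b c d by linarith
  qed
  show ?thesis using s1 s2 s3 s4 s5 s6 s7 unfolding \<phi>_def by linarith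
qed


section \<open>Correctness of the interval algorithm\<close>

lemma powr_seq: assumes "0 < c" shows "(\<lambda>m. 2 powr (-(real m * c))) \<longlonglongrightarrow> 0"
proof -
  have e: "2 powr (-(real m * c)) = (2 powr (-c)) ^ m" for m
  proof -
    have "(2 powr (-c)) ^ m = (2 powr (-c)) powr real m" by (simp add: powr_realpow)
    also have "\<dots> = 2 powr (-(real m * c))" by (simp add: powr_powr mult.commute)
    finally show ?thesis by simp
  qed
  have "2 powr (-c) < 1" using assms by (simp add: powr_less_one)
  then have "(\<lambda>m. (2 powr (-c)) ^ m) \<longlonglongrightarrow> 0" by (intro LIMSEQ_realpow_zero) auto
  then show ?thesis unfolding e .
qed

lemma single_le_prob: "process p \<Longrightarrow> length x = m \<Longrightarrow> Q x \<Longrightarrow> p x \<le> prob_len p m Q"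
  unfolding prob_len_def
  by (rule member_le_sum[where f=p]) (auto intro: process_nonneg finite_subset[OF _ finite_W[of m]])

lemma small_words:
  fixes p :: "'a::finite list \<Rightarrow> real"
  assumes p: "process p" and H: "0 < inf_entropy p" and d: "0 < \<delta>"
  shows "eventually (\<lambda>m. \<forall>x. length x = m \<longrightarrow> p x \<le> \<delta>) sequentially"
proof -
  define l where "l = inf_entropy p / 2"
  have l: "0 < l" "l < inf_entropy p" using H unfolding l_def by auto
  have lim: "(\<lambda>m. prob_len p m (\<lambda>x. info_rate p m x \<le> l)) \<longlonglongrightarrow> 0"
    using inf_below[OF p l(2)] unfolding Sinf_def by simp
  have e1: "eventually (\<lambda>m. prob_len p m (\<lambda>x. info_rate p m x \<le> l) < \<delta>) sequentially"
    using order_tendstoD(2)[OF lim d] .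
  have e2: "eventually (\<lambda>m. 2 powr (-(real m * l)) < \<delta>) sequentially"
    using order_tendstoD(2)[OF powr_seq[OF l(1)] d] .
  have e3: "eventually (\<lambda>m. 1 \<le> m) sequentially" by (rule eventually_ge_at_top)
  show ?thesis using e1 e2 e3
  proof eventually_elim
    case (elim m)
    show ?case
    proof (intro allI impI)
      fix x :: "'a list" assume len: "length x = m"
      show "p x \<le> \<delta>"
      proof (rule ccontr)
        assume "\<not> p x \<le> \<delta>"
        then have big: "\<delta> < p x" by simp
        then have pos: "0 < p x" using d by simp
        have "info_rate p m x \<le> l"
          using info_le_iff[where p=p and xs=x, OF pos] elim big by simp
        then have "p x \<le> prob_len p m (\<lambda>x. info_rate p m x \<le> l)" by (rule single_le_prob[OF p len])
        then show False using elim big by simp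
      qed
    qed
  qed
qed

lemma has_sum_incr:
  fixes f :: "'a \<Rightarrow> real"
  assumes nn: "\<And>x. x \<in> A \<Longrightarrow> 0 \<le> f x" and BA: "\<And>m. B m \<subseteq> A" and fin: "\<And>m. finite (B m)"
    and inc: "\<And>m. B m \<subseteq> B (Suc m)" and cov: "\<And>x. x \<in> A \<Longrightarrow> \<exists>m. x \<in> B m"
    and lim: "(\<lambda>m. sum f (B m)) \<longlonglongrightarrow> S"
  shows "(f has_sum S) A"
proof -
  have incs: "incseq (\<lambda>m. sum f (B m))"
    by (rule incseq_SucI, rule sum_mono2[OF fin inc]) (use nn BA in blast)
  have Ble: "sum f (B m) \<le> S" for m using incseq_le[OF incs lim] by simp
  have monoB: "m \<le> m' \<Longrightarrow> B m \<subseteq> B m'" for m m' using inc by (rule lift_Suc_mono_le)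
  have fin_le: "sum f X \<le> S" if X: "finite X" "X \<subseteq> A" for X
  proof -
    have "\<exists>M. X \<subseteq> B M" using X
    proof (induction X rule: finite_induct)
      case empty then show ?case by simp
    next
      case (insert x X)
      then obtain M where M: "X \<subseteq> B M" by blast
      obtain M' where M': "x \<in> B M'" using cov insert by blast
      have "X \<subseteq> B (max M M')" using M monoB[of M "max M M'"] by auto
      moreover have "x \<in> B (max M M')" using M' monoB[of M' "max M M'"] by auto
      ultimately show ?case by blast
    qed
    then obtain M where "X \<subseteq> B M" by blast
    then have "sum f X \<le> sum f (B M)"
    proof (intro sum_mono2[OF fin])
      show "\<And>b. b \<in> B M - X \<Longrightarrow> 0 \<le> f b" using nn BA by blast
    qed
    then show ?thesis using Ble[of M] by simp
  qed
  have ev: "eventually (\<lambda>X. sum f X \<le> S) (finite_subsets_at_top A)"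
    unfolding eventually_finite_subsets_at_top by (intro exI[of _ "{}"]) (auto intro: fin_le)
  have hs: "(f has_sum (SUP X\<in>{X. X \<subseteq> A \<and> finite X}. sum f X)) A"
    by (rule nonneg_bounded_partial_sums_imp_has_sum_SUP[OF nn ev])
  have bdd: "bdd_above (sum f ` {X. X \<subseteq> A \<and> finite X})"
    by (rule bdd_aboveI[of _ S]) (use fin_le in auto)
  have le1: "(SUP X\<in>{X. X \<subseteq> A \<and> finite X}. sum f X) \<le> S"
    by (rule cSUP_least) (auto intro: fin_le)
  have "sum f (B m) \<le> (SUP X\<in>{X. X \<subseteq> A \<and> finite X}. sum f X)" for m
    by (rule cSUP_upper[OF _ bdd]) (use BA fin in auto)
  then have le2: "S \<le> (SUP X\<in>{X. X \<subseteq> A \<and> finite X}. sum f X)"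
    by (intro LIMSEQ_le_const2[OF lim]) auto
  have "(SUP X\<in>{X. X \<subseteq> A \<and> finite X}. sum f X) = S" using le1 le2 by (rule antisym)
  then show ?thesis using hs by simp
qed


lemma ia_Lset_eq:
  fixes pX :: "'a::{finite,linorder} list \<Rightarrow> real" and pY :: "'b::{finite,linorder} list \<Rightarrow> real"
  assumes pX: "process pX" and pY: "process pY" and y: "length y = n"
  shows "(\<Sum>s\<in>Lset (interval_alg pX pY n) m (\<lambda>z. z = y). pX s) = (\<Sum>x\<in>{x\<in>W m. intv pX x \<subseteq> intv pY y}. pX x)"
proof -
  define \<phi> where "\<phi> = interval_alg pX pY n"
  have "(\<Sum>s\<in>Lset \<phi> m (\<lambda>z. z = y). pX s) = (\<Sum>x\<in>{x\<in>W m. \<exists>s. is_leaf \<phi> s \<and> the (\<phi> s) = y \<and> prefix s x}. pX x)"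
    by (rule Lset_words[OF pX])
  also have "\<dots> = (\<Sum>x\<in>{x\<in>W m. intv pX x \<subseteq> intv pY y}. pX x)"
  proof (rule antisym)
    show "(\<Sum>x\<in>{x\<in>W m. \<exists>s. is_leaf \<phi> s \<and> the (\<phi> s) = y \<and> prefix s x}. pX x) \<le> (\<Sum>x\<in>{x\<in>W m. intv pX x \<subseteq> intv pY y}. pX x)"
    proof (rule sum_le_filter[OF finite_W process_nonneg[OF pX]])
      fix x assume "\<exists>s. is_leaf \<phi> s \<and> the (\<phi> s) = y \<and> prefix s x"
      then obtain s where s: "is_leaf \<phi> s" "the (\<phi> s) = y" "prefix s x" by blast
      have "\<phi> s = Some y" using leaf_some[OF s(1)] s(2) by simp
      then have "intv pX s \<subseteq> intv pY y" using ia_Some unfolding \<phi>_def by blast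
      then show "intv pX x \<subseteq> intv pY y" using intv_prefix[OF pX s(3)] by blast
    qed
    show "(\<Sum>x\<in>{x\<in>W m. intv pX x \<subseteq> intv pY y}. pX x) \<le> (\<Sum>x\<in>{x\<in>W m. \<exists>s. is_leaf \<phi> s \<and> the (\<phi> s) = y \<and> prefix s x}. pX x)"
    proof (rule sum_le_filter[OF finite_W process_nonneg[OF pX]])
      fix x assume sub: "intv pX x \<subseteq> intv pY y" and pos: "0 < pX x"
      have "\<phi> x \<noteq> None" using sub y unfolding \<phi>_def ia_None by blast
      then obtain s where s: "is_leaf \<phi> s" "prefix s x" using ia_stopped[OF pX] unfolding \<phi>_def by blast
      define y' where "y' = the (\<phi> s)"
      have "\<phi> s = Some y'" using leaf_some[OF s(1)] unfolding y'_def .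
      then have y': "length y' = n" "intv pX s \<subseteq> intv pY y'" using ia_Some unfolding \<phi>_def by blast+
      have ne: "intv pX x \<noteq> {}" using pos hi_lo_len[OF pX, of x] unfolding intv_eq by auto
      have "intv pX x \<subseteq> intv pY y'" using y'(2) intv_prefix[OF pX s(2)] by blast
      then have "intv pY y \<inter> intv pY y' \<noteq> {}" using sub ne by blast
      then have "y = y'" using intv_disj[OF pY, of y y'] y y'(1) by auto
      then show "\<exists>s. is_leaf \<phi> s \<and> the (\<phi> s) = y \<and> prefix s x" using s unfolding y'_def by blast
    qed
  qed
  finally show ?thesis unfolding \<phi>_def .
qed

lemma G_upper:
  fixes pX :: "'a::{finite,linorder} list \<Rightarrow> real" and pY :: "'b::{finite,linorder} list \<Rightarrow> real"
  assumes pX: "process pX" and pY: "process pY"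
  shows "(\<Sum>x\<in>{x\<in>W m. intv pX x \<subseteq> intv pY y}. pX x) \<le> pY y"
proof -
  define T where "T = {x\<in>W m. intv pX x \<subseteq> intv pY y}"
  have fT: "finite T" unfolding T_def by (rule finite_subset[OF _ finite_W[of m]]) auto
  have "(\<Sum>x\<in>T. pX x) = (\<Sum>x\<in>T. mu (intv pX x))" using mu_intv[OF pX] by simp
  also have "\<dots> = mu (\<Union>x\<in>T. intv pX x)"
  proof (rule mu_UN_disj[OF fT, symmetric])
    show "intv pX i \<subseteq> {0..<1}" for i by (rule intv_sub01[OF pX])
    show "intv pX i \<in> sets lborel" for i by (rule intv_sets)
    show "intv pX i \<inter> intv pX j = {}" if "i \<in> T" "j \<in> T" "i \<noteq> j" for i j
      using that intv_disj[OF pX, of i j] by (auto simp: T_def)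
  qed
  also have "\<dots> \<le> mu (intv pY y)"
  proof (rule measure_mono_fmeasurable)
    show "(\<Union>x\<in>T. intv pX x) \<subseteq> intv pY y" unfolding T_def by blast
    show "(\<Union>x\<in>T. intv pX x) \<in> sets lborel" by (rule UN_sets[OF fT intv_sets])
    show "intv pY y \<in> fmeasurable lborel" by (rule fm01[OF intv_sub01[OF pY] intv_sets])
  qed
  also have "\<dots> = pY y" by (rule mu_intv[OF pY])
  finally show ?thesis unfolding T_def .
qed

lemma G_lower:
  fixes pX :: "'a::{finite,linorder} list \<Rightarrow> real" and pY :: "'b::{finite,linorder} list \<Rightarrow> real"
  assumes pX: "process pX" and pY: "process pY" and small: "\<And>x. length x = m \<Longrightarrow> pX x \<le> \<delta>" and d: "0 \<le> \<delta>"
  shows "pY y \<le> (\<Sum>x\<in>{x\<in>W m. intv pX x \<subseteq> intv pY y}. pX x) + 2 * \<delta>"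
proof -
  define J where "J = intv pY y"
  define c where "c = lo pY y"
  define d' where "d' = hi pY y"
  have J01: "J \<subseteq> {0..<1}" unfolding J_def by (rule intv_sub01[OF pY])
  have "J = (\<Union>x\<in>W m. J \<inter> intv pX x)" using cover[OF pX, of _ m] J01 by blast
  then have "pY y = mu (\<Union>x\<in>W m. J \<inter> intv pX x)" using mu_intv[OF pY, of y] unfolding J_def by simp
  also have "\<dots> = (\<Sum>x\<in>W m. mu (J \<inter> intv pX x))"
  proof (rule mu_UN_disj[OF finite_W])
    show "J \<inter> intv pX i \<subseteq> {0..<1}" for i using J01 by blast
    show "J \<inter> intv pX i \<in> sets lborel" for i unfolding J_def using intv_sets[of pY y] intv_sets[of pX i] by (rule sets.Int)
    show "(J \<inter> intv pX i) \<inter> (J \<inter> intv pX j) = {}" if "i \<in> W m" "j \<in> W m" "i \<noteq> j" for i j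
      using that intv_disj[OF pX, of i j] by auto
  qed
  also have "\<dots> \<le> (\<Sum>x\<in>W m. (if intv pX x \<subseteq> J then pX x else 0) + ((if c \<in> intv pX x then pX x else 0) + (if d' \<in> intv pX x then pX x else 0)))"
  proof (rule sum_mono)
    fix x :: "'a list"
    have mule: "mu (J \<inter> intv pX x) \<le> pX x"
      using measure_mono_fmeasurable[of "J \<inter> intv pX x" "intv pX x" lborel,
              OF _ sets.Int[OF intv_sets[of pY y] intv_sets[of pX x], folded J_def] fm01[OF intv_sub01[OF pX] intv_sets]]
            mu_intv[OF pX, of x] by auto
    have nn: "0 \<le> pX x" by (rule process_nonneg[OF pX])
    show "mu (J \<inter> intv pX x) \<le> (if intv pX x \<subseteq> J then pX x else 0) + ((if c \<in> intv pX x then pX x else 0) + (if d' \<in> intv pX x then pX x else 0))"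
    proof (cases "intv pX x \<subseteq> J")
      case True then show ?thesis using mule nn by auto
    next
      case False
      show ?thesis
      proof (cases "J \<inter> intv pX x = {}")
        case True then show ?thesis using nn by simp
      next
        case False2: False
        have "{lo pX x..<hi pX x} \<inter> {lo pY y..<hi pY y} \<noteq> {}" "\<not> {lo pX x..<hi pX x} \<subseteq> {lo pY y..<hi pY y}"
          using False False2 unfolding J_def intv_eq by auto
        from straddle[OF this] have "c \<in> intv pX x \<or> d' \<in> intv pX x"
          unfolding c_def d'_def intv_eq .
        then show ?thesis using mule nn False by auto
      qed
    qed
  qed
  also have "\<dots> = (\<Sum>x\<in>W m. if intv pX x \<subseteq> J then pX x else 0) + ((\<Sum>x\<in>W m. if c \<in> intv pX x then pX x else 0) + (\<Sum>x\<in>W m. if d' \<in> intv pX x then pX x else 0))"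
    by (simp only: sum.distrib)
  finally have main: "pY y \<le> (\<Sum>x\<in>W m. if intv pX x \<subseteq> J then pX x else 0) + ((\<Sum>x\<in>W m. if c \<in> intv pX x then pX x else 0) + (\<Sum>x\<in>W m. if d' \<in> intv pX x then pX x else 0))" .
  have A1: "(\<Sum>x\<in>W m. if intv pX x \<subseteq> J then pX x else 0) = (\<Sum>x\<in>{x\<in>W m. intv pX x \<subseteq> J}. pX x)"
    by (rule sum.inter_filter[OF finite_W, symmetric])
  have pt: "(\<Sum>x\<in>W m. if t \<in> intv pX x then pX x else 0) \<le> \<delta>" for t
  proof -
    have "(\<Sum>x\<in>W m. if t \<in> intv pX x then pX x else 0) = (\<Sum>x\<in>{x\<in>W m. t \<in> intv pX x}. pX x)"
      by (rule sum.inter_filter[OF finite_W, symmetric])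
    also have "\<dots> \<le> \<delta>"
      by (rule sum_card1[OF finite_subset[OF _ finite_W[of m]] card_point[OF pX] _ d]) (auto intro: small)
    finally show ?thesis .
  qed
  have "pY y \<le> (\<Sum>x\<in>{x\<in>W m. intv pX x \<subseteq> J}. pX x) + 2 * \<delta>"
    using main A1 pt[of c] pt[of d'] by linarith
  then show ?thesis unfolding J_def .
qed


lemma ia_gen:
  fixes pX :: "'a::{finite,linorder} list \<Rightarrow> real" and pY :: "'b::{finite,linorder} list \<Rightarrow> real"
  assumes pX: "process pX" and pY: "process pY" and H: "0 < inf_entropy pX"
  shows "generates pX pY n (interval_alg pX pY n)"
  unfolding generates_def
proof (intro conjI allI impI)
  fix s y assume "interval_alg pX pY n s = Some y" then show "length y = n" using ia_Some by blast
next
  fix y :: "'b list" assume y: "length y = n"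
  define \<phi> where "\<phi> = interval_alg pX pY n"
  define F where "F m = (\<Sum>s\<in>Lset \<phi> m (\<lambda>z. z = y). pX s)" for m
  have Feq: "F m = (\<Sum>x\<in>{x\<in>W m. intv pX x \<subseteq> intv pY y}. pX x)" for m
    unfolding F_def \<phi>_def by (rule ia_Lset_eq[OF pX pY y])
  have lim: "F \<longlonglongrightarrow> pY y"
    unfolding tendsto_iff
  proof (intro allI impI)
    fix e :: real assume e: "0 < e"
    have "eventually (\<lambda>m. \<forall>x. length x = m \<longrightarrow> pX x \<le> e/4) sequentially"
      using small_words[OF pX H, of "e/4"] e by simp
    then show "eventually (\<lambda>m. dist (F m) (pY y) < e) sequentially"
    proof eventually_elim
      case (elim m)
      have up: "F m \<le> pY y" unfolding Feq by (rule G_upper[OF pX pY])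
      have low: "pY y \<le> F m + 2 * (e/4)" unfolding Feq
        by (rule G_lower[OF pX pY]) (use elim e in auto)
      show ?case using up low e by (simp add: dist_real_def)
    qed
  qed
  show "(pX has_sum pY y) {s. is_leaf (interval_alg pX pY n) s \<and> interval_alg pX pY n s = Some y}"
    unfolding \<phi>_def[symmetric]
  proof (rule has_sum_incr[where B="\<lambda>m. Lset \<phi> m (\<lambda>z. z = y)"])
    show "\<And>x. 0 \<le> pX x" by (rule process_nonneg[OF pX])
    show "Lset \<phi> m (\<lambda>z. z = y) \<subseteq> {s. is_leaf \<phi> s \<and> \<phi> s = Some y}" for m
      unfolding Lset_def using leaf_some by fastforce
    show "finite (Lset \<phi> m (\<lambda>z. z = y))" for m by (rule finite_Lset)
    show "Lset \<phi> m (\<lambda>z. z = y) \<subseteq> Lset \<phi> (Suc m) (\<lambda>z. z = y)" for m unfolding Lset_def by auto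
    show "\<exists>m. s \<in> Lset \<phi> m (\<lambda>z. z = y)" if "s \<in> {s. is_leaf \<phi> s \<and> \<phi> s = Some y}" for s
      using that unfolding Lset_def by (intro exI[of _ "length s"]) auto
    show "(\<lambda>m. sum pX (Lset \<phi> m (\<lambda>z. z = y))) \<longlonglongrightarrow> pY y" using lim unfolding F_def .
  qed
qed


lemma ia_ach:
  fixes pX :: "'a::{finite,linorder} list \<Rightarrow> real" and pY :: "'b::{finite,linorder} list \<Rightarrow> real"
  assumes pX: "process pX" and pY: "process pY" and H: "0 < inf_entropy pX"
    and R: "sup_entropy pY / inf_entropy pX < R"
  shows "achievable_by pX (interval_alg pX pY) R"
proof -
  define HX where "HX = inf_entropy pX"
  define HY where "HY = sup_entropy pY"
  have HX: "0 < HX" unfolding HX_def by (rule H)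
  have HY0: "0 \<le> HY" unfolding HY_def by (rule sup_entropy_nonneg[OF pY])
  have RHX: "HY < R * HX" using R HX unfolding HX_def[symmetric] HY_def[symmetric] by (simp add: divide_less_eq)
  have "0 \<le> HY / HX" using HY0 HX by simp
  then have R0: "0 < R" using R unfolding HX_def HY_def by linarith
  define d where "d = R * HX - HY"
  have d: "0 < d" using RHX unfolding d_def by simp
  define eps where "eps = min (d / (2 * (R + 1))) (HX / 2)"
  have eps: "0 < eps" using d HX R0 unfolding eps_def by simp
  define lX where "lX = HX - eps"
  define lY where "lY = HY + eps"
  have lXpos: "0 < lX" unfolding lX_def eps_def using HX by simp
  define c where "c = R * lX - lY"
  have "(R + 1) * eps \<le> (R + 1) * (d / (2 * (R + 1)))"
    using R0 unfolding eps_def by (intro mult_left_mono) auto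
  also have "\<dots> = d / 2" using R0 by (simp add: field_simps)
  finally have "(R + 1) * eps \<le> d / 2" .
  then have k: "(R + 1) * eps < d" using d by linarith
  have "c = d - (R + 1) * eps" unfolding c_def lX_def lY_def d_def by (simp add: algebra_simps)
  then have c: "0 < c" using k by linarith
  have lXin: "lX \<in> Sinf pX" using inf_below[OF pX] eps unfolding lX_def HX_def by simp
  have lYin: "lY \<in> Ssup pY" using sup_above[OF pY] eps unfolding lY_def HY_def by simp
  define m where "m n = nat \<lfloor>real n * R\<rfloor>" for n
  have mlim: "filterlim m at_top sequentially" unfolding m_def by (rule mR_lim[OF R0])
  have la: "(\<lambda>n. prob_len pX (m n) (\<lambda>x. info_rate pX (m n) x \<le> lX)) \<longlonglongrightarrow> 0"
    using filterlim_compose[OF lXin[unfolded Sinf_def, simplified] mlim] by simp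
  have lb: "(\<lambda>n. prob_len pY n (\<lambda>y. lY \<le> info_rate pY n y)) \<longlonglongrightarrow> 0"
    using lYin unfolding Ssup_def by simp
  have lc: "(\<lambda>n. 2 * (2 powr lX * 2 powr (-(real n * c)))) \<longlonglongrightarrow> 0"
    using tendsto_mult_right_zero[OF tendsto_mult_right_zero[OF powr_seq[OF c]]] by simp
  have ev: "eventually (\<lambda>n. stop_exceeds pX (interval_alg pX pY n) (real n * R)
      \<le> prob_len pX (m n) (\<lambda>x. info_rate pX (m n) x \<le> lX) + prob_len pY n (\<lambda>y. lY \<le> info_rate pY n y)
         + 2 * (2 powr lX * 2 powr (-(real n * c)))) sequentially"
  proof -
    have "eventually (\<lambda>n. 1 \<le> m n) sequentially" using mlim unfolding filterlim_at_top by blast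
    moreover have "eventually (\<lambda>n. 1 \<le> n) sequentially" by (rule eventually_ge_at_top)
    ultimately show ?thesis
    proof eventually_elim
      case (elim n)
      have t0: "0 \<le> real n * R" using R0 by simp
      have "stop_exceeds pX (interval_alg pX pY n) (real n * R)
          = (\<Sum>x\<in>{x\<in>W (m n). \<not> (\<exists>s. is_leaf (interval_alg pX pY n) s \<and> prefix s x)}. pX x)"
        unfolding m_def by (rule stop_exceeds_eq[OF pX t0])
      also have "\<dots> = (\<Sum>x\<in>{x\<in>W (m n). interval_alg pX pY n x = None}. pX x)"
        by (rule sum.cong) (use ia_stopped[OF pX, of pY n] in auto)
      also have "\<dots> \<le> prob_len pX (m n) (\<lambda>x. info_rate pX (m n) x \<le> lX) + prob_len pY n (\<lambda>y. lY \<le> info_rate pY n y)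
         + 2 * 2 powr (real n * lY - real (m n) * lX)"
        by (rule ach_core[OF pX pY]) (use elim in auto)
      also have "2 powr (real n * lY - real (m n) * lX) \<le> 2 powr lX * 2 powr (-(real n * c))"
      proof -
        have "real n * R - 1 < real (m n)" unfolding m_def by (rule nat_floor_bounds(2)[OF t0])
        then have "(real n * R - 1) * lX \<le> real (m n) * lX" using lXpos by (intro mult_right_mono) auto
        then have h: "real n * lY - real (m n) * lX \<le> lX + (-(real n * c))"
          unfolding c_def by (simp add: algebra_simps)
        have "2 powr (real n * lY - real (m n) * lX) \<le> 2 powr (lX + (-(real n * c)))"
          using h by (rule powr_mono) simp
        also have "\<dots> = 2 powr lX * 2 powr (-(real n * c))" by (rule powr_add)
        finally show ?thesis .
      qed
      finally show ?case by simp
    qed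
  qed
  have "(\<lambda>n. stop_exceeds pX (interval_alg pX pY n) (real n * R)) \<longlonglongrightarrow> 0"
    by (rule tendsto_sandwich[OF _ ev tendsto_const]) (use tendsto_add[OF tendsto_add[OF la lb] lc] in \<open>simp_all add: stop_exceeds_nonneg[OF pX]\<close>)
  then show ?thesis unfolding achievable_by_def .
qed


lemma Inf_thresh:
  fixes S :: "real set"
  assumes up: "\<And>R. r < R \<Longrightarrow> R \<in> S" and low: "\<And>R. R \<in> S \<Longrightarrow> r \<le> R"
  shows "Inf S = r"
proof (rule antisym)
  have ne: "S \<noteq> {}" using up[of "r + 1"] by auto
  have bdd: "bdd_below S" by (rule bdd_belowI[of _ r]) (rule low)
  show "r \<le> Inf S" by (rule cInf_greatest[OF ne low])
  show "Inf S \<le> r"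
  proof (rule ccontr)
    assume "\<not> Inf S \<le> r"
    then have "(r + Inf S) / 2 \<in> S" by (intro up) simp
    then have "Inf S \<le> (r + Inf S) / 2" by (rule cInf_lower[OF _ bdd])
    then show False using \<open>\<not> Inf S \<le> r\<close> by simp
  qed
qed

lemma rates:
  fixes pX :: "'a::{finite,linorder} list \<Rightarrow> real" and pY :: "'b::{finite,linorder} list \<Rightarrow> real"
  assumes pX: "process pX" and pY: "process pY" and H: "0 < inf_entropy pX"
    and conv: "\<And>\<Phi> R. (\<forall>n. generates pX pY n (\<Phi> n)) \<Longrightarrow> achievable_by pX \<Phi> R \<Longrightarrow> sup_entropy pY \<le> R * inf_entropy pX"
  shows "int_rate pX pY = sup_entropy pY / inf_entropy pX \<and> opt_rate pX pY = sup_entropy pY / inf_entropy pX"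
proof -
  define r where "r = sup_entropy pY / inf_entropy pX"
  have gen: "\<forall>n. generates pX pY n (interval_alg pX pY n)" using ia_gen[OF pX pY H] by blast
  have conv': "r \<le> R" if "\<forall>n. generates pX pY n (\<Phi> n)" "achievable_by pX \<Phi> R" for \<Phi> R
    using conv[OF that] H unfolding r_def by (simp add: divide_le_eq)
  have "int_rate pX pY = r"
    unfolding int_rate_def
    by (rule Inf_thresh) (use ia_ach[OF pX pY H] conv'[OF gen] in \<open>auto simp: r_def\<close>)
  moreover have "opt_rate pX pY = r"
    unfolding opt_rate_def
  proof (rule Inf_thresh)
    fix R assume "r < R"
    then have "achievable_by pX (interval_alg pX pY) R" using ia_ach[OF pX pY H] unfolding r_def by blast
    then show "R \<in> {R. \<exists>\<Phi>. (\<forall>n. generates pX pY n (\<Phi> n)) \<and> achievable_by pX \<Phi> R}" using gen by blast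
  next
    fix R assume "R \<in> {R. \<exists>\<Phi>. (\<forall>n. generates pX pY n (\<Phi> n)) \<and> achievable_by pX \<Phi> R}"
    then show "r \<le> R" using conv' by blast
  qed
  ultimately show ?thesis unfolding r_def by simp
qed

theorem corollary3:
  fixes pX :: "'x::{finite,linorder} list \<Rightarrow> real"
    and pY :: "'y::{finite,linorder} list \<Rightarrow> real"
  assumes "process pX" and "process pY"
  shows "(sup_entropy pX = inf_entropy pX \<and> inf_entropy pX = entropy_rate pX \<and> entropy_rate pX > 0
            \<longrightarrow> int_rate pX pY = opt_rate pX pY \<and> opt_rate pX pY = sup_entropy pY / entropy_rate pX)
       \<and> (sup_entropy pY = inf_entropy pY \<and> inf_entropy pY = entropy_rate pY \<and> inf_entropy pX > 0
            \<longrightarrow> int_rate pX pY = opt_rate pX pY \<and> opt_rate pX pY = entropy_rate pY / inf_entropy pX)"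
proof (intro conjI impI)
  assume h: "sup_entropy pX = inf_entropy pX \<and> inf_entropy pX = entropy_rate pX \<and> entropy_rate pX > 0"
  have H: "0 < inf_entropy pX" using h by simp
  have "int_rate pX pY = sup_entropy pY / inf_entropy pX \<and> opt_rate pX pY = sup_entropy pY / inf_entropy pX"
  proof (rule rates[OF assms H])
    fix \<Phi> R assume "\<forall>n. generates pX pY n (\<Phi> n)" "achievable_by pX \<Phi> R"
    then have "sup_entropy pY \<le> R * sup_entropy pX" using conv_sup[OF assms] by blast
    then show "sup_entropy pY \<le> R * inf_entropy pX" using h by simp
  qed
  then show "int_rate pX pY = opt_rate pX pY" "opt_rate pX pY = sup_entropy pY / entropy_rate pX"
    using h by simp_all
next
  assume h: "sup_entropy pY = inf_entropy pY \<and> inf_entropy pY = entropy_rate pY \<and> inf_entropy pX > 0"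
  have H: "0 < inf_entropy pX" using h by simp
  have "int_rate pX pY = sup_entropy pY / inf_entropy pX \<and> opt_rate pX pY = sup_entropy pY / inf_entropy pX"
  proof (rule rates[OF assms H])
    fix \<Phi> R assume "\<forall>n. generates pX pY n (\<Phi> n)" "achievable_by pX \<Phi> R"
    then have "inf_entropy pY \<le> R * inf_entropy pX" using conv_inf[OF assms] by blast
    then show "sup_entropy pY \<le> R * inf_entropy pX" using h by simp
  qed
  then show "int_rate pX pY = opt_rate pX pY" "opt_rate pX pY = entropy_rate pY / inf_entropy pX"
    using h by simp_all
qed

end
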